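(* Let $x_1(t)$ be a smooth real function and $z_1(t),z_2(t),z_3(t)$ smooth complex functions satisfying $$\dot x_1=-3\,\mathrm{Im}(z_1z_2z_3),\quad \dot z_1=z_1(|z_2|^2-|z_3|^2)+ix_1\overline{z_2z_3},$$ $$\dot z_2=z_2(|z_3|^2-|z_1|^2)+ix_1\overline{z_3z_1},\quad \dot z_3=z_3(|z_1|^2-|z_2|^2)+ix_1\overline{z_1z_2},$$ with $\mathrm{Re}(z_1z_2z_3)=0$ at $t=0$, and with initial point whose orbit under the action $(x_1,z_1,z_2,z_3)\mapsto(rx_1,re^{i\phi_1}z_1,re^{i\phi_2}z_2,re^{-i(\phi_1+\phi_2)}z_3)$ ($r>0$, $\phi_1,\phi_2\in\mathbb{R}$) of $\mathbb{R}^+\times\mathrm{U}(1)^2$ is $3$-dimensional. Then the solution exists for all $t\in\mathbb{R}$, $\mathrm{Re}(z_1z_2z_3)=0$ for all $t$, $x_1^2+|z_1|^2+|z_2|^2+|z_3|^2$ is constant (and may be taken to be $1$), and $$M=\big\{\big(rx_1(t),re^{i\phi_1}z_1(t),re^{i\phi_2}z_2(t),re^{-i(\phi_1+\phi_2)}z_3(t)\big):r>0,\ \phi_1,\phi_2,t\in\mathbb{R}\big\}$$ is a coassociative $4$-fold in $\mathbb{R}^7$.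
   Context: $\mathbb{R}^7\cong\mathbb{R}\oplus\mathbb{C}^3$ via $z_1=x_2+ix_3$, $z_2=x_4+ix_5$, $z_3=x_6+ix_7$. Coassociative $4$-folds are oriented $4$-dimensional submanifolds calibrated by $\ast\varphi_0=d\mathbf{x}_{4567}+d\mathbf{x}_{2367}+d\mathbf{x}_{2345}+d\mathbf{x}_{1357}-d\mathbf{x}_{1346}-d\mathbf{x}_{1256}-d\mathbf{x}_{1247}$ (equivalently, suitably oriented $4$-folds on which $\varphi_0=d\mathbf{x}_{123}+d\mathbf{x}_{145}+d\mathbf{x}_{167}+d\mathbf{x}_{246}-d\mathbf{x}_{257}-d\mathbf{x}_{347}-d\mathbf{x}_{356}$ vanishes), where $d\mathbf{x}_{ij\dots k}=dx_i\wedge dx_j\wedge\dots\wedge dx_k$. *)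

theory Defs
  imports "HOL-Analysis.Analysis"
begin

text \<open>R^7 = R + C^3, with x1 real and z1 = x2 + i x3, z2 = x4 + i x5, z3 = x6 + i x7.\<close>
type_synonym R7 = "real \<times> complex \<times> complex \<times> complex"

definition coord :: "R7 \<Rightarrow> nat \<Rightarrow> real" where
  "coord p i = (case p of (x1, z1, z2, z3) \<Rightarrow>
     (if i = 1 then x1 else if i = 2 then Re z1 else if i = 3 then Im z1
      else if i = 4 then Re z2 else if i = 5 then Im z2
      else if i = 6 then Re z3 else if i = 7 then Im z3 else 0))"

text \<open>dx_i wedge dx_j wedge dx_k evaluated on (u,v,w): the 3x3 determinant.\<close>
definition dx3 :: "nat \<Rightarrow> nat \<Rightarrow> nat \<Rightarrow> R7 \<Rightarrow> R7 \<Rightarrow> R7 \<Rightarrow> real" where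
  "dx3 i j k u v w =
     coord u i * (coord v j * coord w k - coord v k * coord w j)
   - coord u j * (coord v i * coord w k - coord v k * coord w i)
   + coord u k * (coord v i * coord w j - coord v j * coord w i)"

definition phi0 :: "R7 \<Rightarrow> R7 \<Rightarrow> R7 \<Rightarrow> real" where
  "phi0 u v w = dx3 1 2 3 u v w + dx3 1 4 5 u v w + dx3 1 6 7 u v w + dx3 2 4 6 u v w
     - dx3 2 5 7 u v w - dx3 3 4 7 u v w - dx3 3 5 6 u v w"

text \<open>C^k and C^infinity on a set (meant for open sets): iterated directional derivatives.\<close>
fun Ck_on :: "nat \<Rightarrow> ('a::real_normed_vector \<Rightarrow> 'b::real_normed_vector) \<Rightarrow> 'a set \<Rightarrow> bool" where
  "Ck_on 0 f U = continuous_on U f"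
| "Ck_on (Suc k) f U = (\<exists>Df. (\<forall>x\<in>U. (f has_derivative Df x) (at x)) \<and>
                                (\<forall>v. Ck_on k (\<lambda>x. Df x v) U))"

definition smooth_on :: "('a::real_normed_vector \<Rightarrow> 'b::real_normed_vector) \<Rightarrow> 'a set \<Rightarrow> bool" where
  "smooth_on f U \<longleftrightarrow> (\<forall>k. Ck_on k f U)"

text \<open>Coassociative 4-fold (possibly immersed): image of a smooth immersion of an open
  subset of R^4 whose tangent planes are all coassociative, i.e. phi0 vanishes on them.\<close>
definition coassociative_4fold :: "R7 set \<Rightarrow> bool" where
  "coassociative_4fold M \<longleftrightarrow>
     (\<exists>(U :: (real \<times> real \<times> real \<times> real) set) F.
        open U \<and> U \<noteq> {} \<and> smooth_on F U \<and> F ` U = M \<and>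
        (\<forall>u\<in>U. \<exists>D. (F has_derivative D) (at u) \<and> inj D \<and>
                 (\<forall>a b c. phi0 (D a) (D b) (D c) = 0)))"

definition act :: "real \<times> real \<times> real \<Rightarrow> R7 \<Rightarrow> R7" where
  "act g p = (case g of (r, f1, f2) \<Rightarrow> case p of (x1, z1, z2, z3) \<Rightarrow>
     (r * x1, of_real r * cis f1 * z1, of_real r * cis f2 * z2, of_real r * cis (-(f1 + f2)) * z3))"

definition orbit_dim3 :: "R7 \<Rightarrow> bool" where
  "orbit_dim3 p \<longleftrightarrow> (\<exists>D. ((\<lambda>g. act g p) has_derivative D) (at (1, 0, 0)) \<and> dim (range D) = 3)"

definition is_solution_on ::
  "real set \<Rightarrow> (real \<Rightarrow> real) \<Rightarrow> (real \<Rightarrow> complex) \<Rightarrow> (real \<Rightarrow> complex) \<Rightarrow> (real \<Rightarrow> complex) \<Rightarrow> bool" where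
  "is_solution_on I x z1 z2 z3 \<longleftrightarrow>
     smooth_on (\<lambda>t. (x t, z1 t, z2 t, z3 t)) I \<and>
     (\<forall>t\<in>I.
        (x has_real_derivative (- 3 * Im (z1 t * z2 t * z3 t))) (at t) \<and>
        (z1 has_vector_derivative
           (z1 t * of_real ((cmod (z2 t))\<^sup>2 - (cmod (z3 t))\<^sup>2) + \<i> * of_real (x t) * cnj (z2 t * z3 t))) (at t) \<and>
        (z2 has_vector_derivative
           (z2 t * of_real ((cmod (z3 t))\<^sup>2 - (cmod (z1 t))\<^sup>2) + \<i> * of_real (x t) * cnj (z3 t * z1 t))) (at t) \<and>
        (z3 has_vector_derivative
           (z3 t * of_real ((cmod (z1 t))\<^sup>2 - (cmod (z2 t))\<^sup>2) + \<i> * of_real (x t) * cnj (z1 t * z2 t))) (at t))"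

end

theory Submission
  imports Defs
begin

lemma CkSucE:
  assumes "Ck_on (Suc k) f U"
  obtains Df where "\<And>x. x\<in>U \<Longrightarrow> (f has_derivative Df x) (at x)" "\<And>v. Ck_on k (\<lambda>x. Df x v) U"
  using assms by (simp only: Ck_on.simps(2)) blast

lemma CkSucI:
  assumes "\<And>x. x\<in>U \<Longrightarrow> (f has_derivative Df x) (at x)" "\<And>v. Ck_on k (\<lambda>x. Df x v) U"
  shows "Ck_on (Suc k) f U"
  unfolding Ck_on.simps(2) using assms by blast

lemma Ck_mono: "Ck_on (Suc k) f U \<Longrightarrow> Ck_on k f U"
proof (induction k arbitrary: f)
  case 0
  then obtain Df where "\<And>x. x\<in>U \<Longrightarrow> (f has_derivative Df x) (at x)" by (rule CkSucE) blast
  then show ?case by (auto intro!: continuous_at_imp_continuous_on has_derivative_continuous)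
next
  case (Suc k)
  from Suc.prems obtain Df where d: "\<And>x. x\<in>U \<Longrightarrow> (f has_derivative Df x) (at x)" "\<And>v. Ck_on (Suc k) (\<lambda>x. Df x v) U"
    by (rule CkSucE) blast
  show ?case by (rule CkSucI[where Df=Df]) (erule d(1), rule Suc.IH, rule d(2))
qed

lemma Ck_const: "Ck_on k (\<lambda>x. c) U"
proof (induction k arbitrary: c)
  case 0 then show ?case by (simp)
next
  case (Suc k)
  show ?case by (rule CkSucI[where Df="\<lambda>x v. 0"]) (simp, rule Suc.IH)
qed

lemma Ck_add: "Ck_on k f U \<Longrightarrow> Ck_on k g U \<Longrightarrow> Ck_on k (\<lambda>x. f x + g x) U"
proof (induction k arbitrary: f g)
  case 0 then show ?case by (auto intro: continuous_on_add)
next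
  case (Suc k)
  obtain Df where d: "\<And>x. x\<in>U \<Longrightarrow> (f has_derivative Df x) (at x)" "\<And>v. Ck_on k (\<lambda>x. Df x v) U"
    using Suc.prems(1) by (rule CkSucE) blast
  obtain Dg where e: "\<And>x. x\<in>U \<Longrightarrow> (g has_derivative Dg x) (at x)" "\<And>v. Ck_on k (\<lambda>x. Dg x v) U"
    using Suc.prems(2) by (rule CkSucE) blast
  show ?case
    by (rule CkSucI[where Df="\<lambda>x v. Df x v + Dg x v"])
       (rule has_derivative_add[OF d(1) e(1)], assumption, assumption, rule Suc.IH[OF d(2) e(2)])
qed

lemma Ck_linear: "bounded_linear L \<Longrightarrow> Ck_on k f U \<Longrightarrow> Ck_on k (\<lambda>x. L (f x)) U"
proof (induction k arbitrary: f)
  case 0 then show ?case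
    by (auto intro: continuous_on_compose2[OF linear_continuous_on[OF 0(1)]])
next
  case (Suc k)
  obtain Df where d: "\<And>x. x\<in>U \<Longrightarrow> (f has_derivative Df x) (at x)" "\<And>v. Ck_on k (\<lambda>x. Df x v) U"
    using Suc.prems(2) by (rule CkSucE) blast
  show ?case
    by (rule CkSucI[where Df="\<lambda>x v. L (Df x v)"])
       (rule bounded_linear.has_derivative[OF Suc.prems(1) d(1)], assumption, rule Suc.IH[OF Suc.prems(1) d(2)])
qed

lemma Ck_mult:
  fixes f g :: "'a::real_normed_vector \<Rightarrow> 'b::real_normed_algebra"
  shows "Ck_on k f U \<Longrightarrow> Ck_on k g U \<Longrightarrow> Ck_on k (\<lambda>x. f x * g x) U"
proof (induction k arbitrary: f g)
  case 0 then show ?case by (auto intro: continuous_on_mult)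
next
  case (Suc k)
  obtain Df where d: "\<And>x. x\<in>U \<Longrightarrow> (f has_derivative Df x) (at x)" "\<And>v. Ck_on k (\<lambda>x. Df x v) U"
    using Suc.prems(1) by (rule CkSucE) blast
  obtain Dg where e: "\<And>x. x\<in>U \<Longrightarrow> (g has_derivative Dg x) (at x)" "\<And>v. Ck_on k (\<lambda>x. Dg x v) U"
    using Suc.prems(2) by (rule CkSucE) blast
  have f: "Ck_on k f U" and g: "Ck_on k g U" using Suc.prems Ck_mono by blast+
  show ?case
    by (rule CkSucI[where Df="\<lambda>x v. f x * Dg x v + Df x v * g x"])
       (rule has_derivative_mult[OF d(1) e(1)], assumption, assumption,
        rule Ck_add[OF Suc.IH[OF f e(2)] Suc.IH[OF d(2) g]])
qed

lemma Ck_Pair: "Ck_on k f U \<Longrightarrow> Ck_on k g U \<Longrightarrow> Ck_on k (\<lambda>x. (f x, g x)) U"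
proof (induction k arbitrary: f g)
  case 0 then show ?case by (auto intro: continuous_on_Pair)
next
  case (Suc k)
  obtain Df where d: "\<And>x. x\<in>U \<Longrightarrow> (f has_derivative Df x) (at x)" "\<And>v. Ck_on k (\<lambda>x. Df x v) U"
    using Suc.prems(1) by (rule CkSucE) blast
  obtain Dg where e: "\<And>x. x\<in>U \<Longrightarrow> (g has_derivative Dg x) (at x)" "\<And>v. Ck_on k (\<lambda>x. Dg x v) U"
    using Suc.prems(2) by (rule CkSucE) blast
  show ?case
    by (rule CkSucI[where Df="\<lambda>x v. (Df x v, Dg x v)"])
       (rule has_derivative_Pair[OF d(1) e(1)], assumption, assumption, rule Suc.IH[OF d(2) e(2)])
qed

lemma Ck_comp_linear:
  assumes "bounded_linear L" "\<And>y. y\<in>V \<Longrightarrow> L y \<in> S"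
  shows "Ck_on k f S \<Longrightarrow> Ck_on k (\<lambda>y. f (L y)) V"
proof (induction k arbitrary: f)
  case 0 then show ?case using assms
    by (auto intro!: continuous_on_compose2[OF _ linear_continuous_on[OF assms(1)]])
next
  case (Suc k)
  obtain Df where d: "\<And>x. x\<in>S \<Longrightarrow> (f has_derivative Df x) (at x)" "\<And>v. Ck_on k (\<lambda>x. Df x v) S"
    using Suc.prems(1) by (rule CkSucE) blast
  show ?case
    by (rule CkSucI[where Df="\<lambda>y v. Df (L y) (L v)"])
       (rule has_derivative_compose[OF bounded_linear_imp_has_derivative[OF assms(1)] d(1)],
        rule assms(2), assumption, rule Suc.IH[OF d(2)])
qed

lemma Ck_real_deriv:
  fixes f :: "real \<Rightarrow> 'b::real_normed_vector"
  assumes "\<And>x. x\<in>U \<Longrightarrow> (f has_vector_derivative f' x) (at x)" "Ck_on k f' U"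
  shows "Ck_on (Suc k) f U"
  by (rule CkSucI[where Df="\<lambda>x v. v *\<^sub>R f' x"])
     (use assms(1) in \<open>simp add: has_vector_derivative_def\<close>,
      rule Ck_linear[OF bounded_linear_scaleR_right assms(2)])

lemma Ck_cis: "Ck_on k cis U"
proof (induction k)
  case 0 then show ?case by (auto intro!: continuous_intros)
next
  case (Suc k)
  have "\<And>x. (cis has_vector_derivative (\<i> * cis x)) (at x)"
    unfolding has_vector_derivative_def using has_derivative_cis[OF has_derivative_ident] by simp
  then show ?case by (rule Ck_real_deriv) (rule Ck_linear[OF bounded_linear_mult_right Suc.IH])
qed

definition Gv :: "R7 \<Rightarrow> R7" where
  "Gv p = (case p of (x, z1, z2, z3) \<Rightarrow>
     (- 3 * Im (z1 * z2 * z3),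
      z1 * of_real ((cmod z2)\<^sup>2 - (cmod z3)\<^sup>2) + \<i> * of_real x * cnj (z2 * z3),
      z2 * of_real ((cmod z3)\<^sup>2 - (cmod z1)\<^sup>2) + \<i> * of_real x * cnj (z3 * z1),
      z3 * of_real ((cmod z1)\<^sup>2 - (cmod z2)\<^sup>2) + \<i> * of_real x * cnj (z1 * z2)))"

lemma of_real_cmod_sq: "(of_real ((cmod a)\<^sup>2 - (cmod b)\<^sup>2) :: complex) = a * cnj a - b * cnj b"
  by (simp only: of_real_diff complex_norm_square)

lemma Gv_alt: "Gv p =
     (- 3 * Im (fst (snd p) * fst (snd (snd p)) * snd (snd (snd p))),
      fst (snd p) * (fst (snd (snd p)) * cnj (fst (snd (snd p))) - snd (snd (snd p)) * cnj (snd (snd (snd p))))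
        + \<i> * of_real (fst p) * cnj (fst (snd (snd p)) * snd (snd (snd p))),
      fst (snd (snd p)) * (snd (snd (snd p)) * cnj (snd (snd (snd p))) - fst (snd p) * cnj (fst (snd p)))
        + \<i> * of_real (fst p) * cnj (snd (snd (snd p)) * fst (snd p)),
      snd (snd (snd p)) * (fst (snd p) * cnj (fst (snd p)) - fst (snd (snd p)) * cnj (fst (snd (snd p))))
        + \<i> * of_real (fst p) * cnj (fst (snd p) * fst (snd (snd p))))"
  by (cases p) (simp only: Gv_def of_real_cmod_sq prod.case fst_conv snd_conv)

lemma Ck_diff: "Ck_on k f U \<Longrightarrow> Ck_on k g U \<Longrightarrow> Ck_on k (\<lambda>x. f x - g x) U"
  using Ck_add[of k f U "\<lambda>x. (-1) *\<^sub>R g x"] Ck_linear[OF bounded_linear_scaleR_right[of "-1"], of k g U]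
  by simp

lemma Ck_Gv: "Ck_on k U S \<Longrightarrow> Ck_on k (\<lambda>t. Gv (U t)) S"
  unfolding Gv_alt
  by (intro Ck_Pair Ck_add Ck_diff Ck_mult Ck_const Ck_linear[OF bounded_linear_fst]
      Ck_linear[OF bounded_linear_snd] Ck_linear[OF bounded_linear_Im] Ck_linear[OF bounded_linear_cnj]
      Ck_linear[OF bounded_linear_of_real]; assumption)

lemma smooth_of_deriv:
  assumes "\<And>t. t \<in> I \<Longrightarrow> (U has_vector_derivative Gv (U t)) (at t)"
  shows "smooth_on U I"
  unfolding smooth_on_def
proof
  fix k show "Ck_on k U I"
  proof (induction k)
    case 0 then show ?case using assms
      by (auto intro!: continuous_at_imp_continuous_on vector_derivative_works[THEN iffD2]
        intro: has_vector_derivative_continuous)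
  next
    case (Suc k) then show ?case by (intro Ck_real_deriv[OF assms] Ck_Gv)
  qed
qed

lemma inner_Gv: "inner p (Gv p) = 0"
  unfolding Gv_alt by (simp add: inner_prod_def inner_complex_def algebra_simps)

lemma Re_deriv_zero:
  fixes z1 z2 z3 :: complex
  shows "Re ((z1 * of_real ((cmod z2)\<^sup>2 - (cmod z3)\<^sup>2) + \<i> * of_real x * cnj (z2 * z3)) * z2 * z3
           + z1 * (z2 * of_real ((cmod z3)\<^sup>2 - (cmod z1)\<^sup>2) + \<i> * of_real x * cnj (z3 * z1)) * z3
           + z1 * z2 * (z3 * of_real ((cmod z1)\<^sup>2 - (cmod z2)\<^sup>2) + \<i> * of_real x * cnj (z1 * z2))) = 0"
  unfolding of_real_cmod_sq by (simp add: algebra_simps)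

lemma hvd_fst: "(f has_vector_derivative f') F \<Longrightarrow> ((\<lambda>t. fst (f t)) has_vector_derivative fst f') F"
  unfolding has_vector_derivative_def
  by (drule bounded_linear.has_derivative[OF bounded_linear_fst]) simp

lemma hvd_snd: "(f has_vector_derivative f') F \<Longrightarrow> ((\<lambda>t. snd (f t)) has_vector_derivative snd f') F"
  unfolding has_vector_derivative_def
  by (drule bounded_linear.has_derivative[OF bounded_linear_snd]) simp

lemma sol_deriv:
  assumes "is_solution_on I x z1 z2 z3" "t \<in> I"
  shows "((\<lambda>t. (x t, z1 t, z2 t, z3 t)) has_vector_derivative Gv (x t, z1 t, z2 t, z3 t)) (at t)"
  using assms unfolding is_solution_on_def Gv_def
  by (auto intro!: has_vector_derivative_Pair simp: has_real_derivative_iff_has_vector_derivative)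

lemma sol_of_deriv:
  assumes "\<And>t. t \<in> I \<Longrightarrow> (U has_vector_derivative Gv (U t)) (at t)"
  shows "is_solution_on I (\<lambda>t. fst (U t)) (\<lambda>t. fst (snd (U t))) (\<lambda>t. fst (snd (snd (U t)))) (\<lambda>t. snd (snd (snd (U t))))"
proof -
  have U: "(\<lambda>t. (fst (U t), fst (snd (U t)), fst (snd (snd (U t))), snd (snd (snd (U t))))) = U" by simp
  have sm: "smooth_on U I" by (rule smooth_of_deriv[OF assms])
  show ?thesis unfolding is_solution_on_def U
  proof (intro conjI sm ballI)
    fix t assume t: "t \<in> I"
    obtain x z1 z2 z3 where e: "U t = (x, z1, z2, z3)" by (cases "U t") auto
    have d: "(U has_vector_derivative Gv (U t)) (at t)" by (rule assms[OF t])
    note d1 = hvd_fst[OF d] and d2 = hvd_fst[OF hvd_snd[OF d]] and d3 = hvd_fst[OF hvd_snd[OF hvd_snd[OF d]]]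
      and d4 = hvd_snd[OF hvd_snd[OF hvd_snd[OF d]]]
    show "((\<lambda>t. fst (U t)) has_real_derivative - 3 * Im (fst (snd (U t)) * fst (snd (snd (U t))) * snd (snd (snd (U t))))) (at t)"
      using d1 e by (simp add: has_real_derivative_iff_has_vector_derivative Gv_def)
    show "((\<lambda>t. fst (snd (U t))) has_vector_derivative
       fst (snd (U t)) * complex_of_real ((cmod (fst (snd (snd (U t)))))\<^sup>2 - (cmod (snd (snd (snd (U t)))))\<^sup>2) +
        \<i> * complex_of_real (fst (U t)) * cnj (fst (snd (snd (U t))) * snd (snd (snd (U t))))) (at t)"
      using d2 e by (simp add: Gv_def)
    show "((\<lambda>t. fst (snd (snd (U t)))) has_vector_derivative
       fst (snd (snd (U t))) * complex_of_real ((cmod (snd (snd (snd (U t)))))\<^sup>2 - (cmod (fst (snd (U t))))\<^sup>2) +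
        \<i> * complex_of_real (fst (U t)) * cnj (snd (snd (snd (U t))) * fst (snd (U t)))) (at t)"
      using d3 e by (simp add: Gv_def)
    show "((\<lambda>t. snd (snd (snd (U t)))) has_vector_derivative
       snd (snd (snd (U t))) * complex_of_real ((cmod (fst (snd (U t))))\<^sup>2 - (cmod (fst (snd (snd (U t)))))\<^sup>2) +
        \<i> * complex_of_real (fst (U t)) * cnj (fst (snd (U t)) * fst (snd (snd (U t))))) (at t)"
      using d4 e by (simp add: Gv_def)
  qed
qed

lemma triple_lip:
  fixes a b c a' b' c' :: complex
  assumes "norm a \<le> R" "norm b \<le> R" "norm c \<le> R" "norm a' \<le> R" "norm b' \<le> R" "norm c' \<le> R"
    "norm (a - a') \<le> D" "norm (b - b') \<le> D" "norm (c - c') \<le> D"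
  shows "norm (a * b * c - a' * b' * c') \<le> 3 * R\<^sup>2 * D"
proof -
  have eq: "a * b * c - a' * b' * c' = (a - a') * b * c + a' * (b - b') * c + a' * b' * (c - c')"
    by (simp add: algebra_simps)
  have R: "0 \<le> R" using assms(1) norm_ge_zero order_trans by blast
  have D: "0 \<le> D" using assms(7) norm_ge_zero order_trans by blast
  have 1: "norm ((a - a') * b * c) \<le> D * R * R"
    unfolding norm_mult by (intro mult_mono) (use assms R D in auto)
  have 2: "norm (a' * (b - b') * c) \<le> R * D * R"
    unfolding norm_mult by (intro mult_mono) (use assms R D in auto)
  have 3: "norm (a' * b' * (c - c')) \<le> R * R * D"
    unfolding norm_mult by (intro mult_mono) (use assms R D in auto)
  have "norm (a * b * c - a' * b' * c') \<le> D * R * R + R * D * R + R * R * D"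
    unfolding eq by (rule order_trans[OF norm_triangle_ineq] add_mono 1 2 3 order_trans[OF norm_triangle_ineq])+
  then show ?thesis by (simp add: power2_eq_square algebra_simps)
qed

lemma comp_norms: "norm a \<le> norm (a,b,c,d)" "norm b \<le> norm (a,b,c,d)" "norm c \<le> norm (a,b,c,d)" "norm d \<le> norm (a,b,c,d)"
proof -
  show "norm a \<le> norm (a,b,c,d)" by (rule norm_fst_le)
  have 1: "norm (b,c,d) \<le> norm (a,b,c,d)" by (rule norm_snd_le)
  have 2: "norm (c,d) \<le> norm (b,c,d)" by (rule norm_snd_le)
  show "norm b \<le> norm (a,b,c,d)" using norm_fst_le[of b "(c,d)"] 1 by linarith
  show "norm c \<le> norm (a,b,c,d)" using norm_fst_le[of c d] 1 2 by linarith
  show "norm d \<le> norm (a,b,c,d)" using norm_snd_le[of d c] 1 2 by linarith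
qed

lemma norm4_le: "norm (a,b,c,d) \<le> norm a + norm b + norm c + norm d"
  using norm_Pair_le[of a "(b,c,d)"] norm_Pair_le[of b "(c,d)"] norm_Pair_le[of c d] by linarith

lemma comp_lip:
  fixes a b c a' b' c' :: complex and x x' :: real
  assumes "norm a \<le> R" "norm b \<le> R" "norm c \<le> R" "norm a' \<le> R" "norm b' \<le> R" "norm c' \<le> R"
    "norm (a - a') \<le> D" "norm (b - b') \<le> D" "norm (c - c') \<le> D" "\<bar>x\<bar> \<le> R" "\<bar>x'\<bar> \<le> R" "\<bar>x - x'\<bar> \<le> D"
  shows "norm ((a * (b * cnj b - c * cnj c) + \<i> * of_real x * cnj (b * c)) -
               (a' * (b' * cnj b' - c' * cnj c') + \<i> * of_real x' * cnj (b' * c'))) \<le> 9 * R\<^sup>2 * D"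
proof -
  have eq: "(a * (b * cnj b - c * cnj c) + \<i> * of_real x * cnj (b * c)) -
               (a' * (b' * cnj b' - c' * cnj c') + \<i> * of_real x' * cnj (b' * c')) =
      (a * b * cnj b - a' * b' * cnj b') - (a * c * cnj c - a' * c' * cnj c') +
      ((\<i> * of_real x) * cnj b * cnj c - (\<i> * of_real x') * cnj b' * cnj c')"
    by (simp add: algebra_simps)
  have 1: "norm (a * b * cnj b - a' * b' * cnj b') \<le> 3 * R\<^sup>2 * D"
    by (rule triple_lip) (use assms in \<open>auto simp: complex_cnj_diff[symmetric] simp del: complex_cnj_diff\<close>)
  have 2: "norm (a * c * cnj c - a' * c' * cnj c') \<le> 3 * R\<^sup>2 * D"
    by (rule triple_lip) (use assms in \<open>auto simp: complex_cnj_diff[symmetric] simp del: complex_cnj_diff\<close>)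
  have 3: "norm ((\<i> * of_real x) * cnj b * cnj c - (\<i> * of_real x') * cnj b' * cnj c') \<le> 3 * R\<^sup>2 * D"
    by (rule triple_lip) (use assms in \<open>auto simp: complex_cnj_diff[symmetric] norm_mult right_diff_distrib[symmetric] of_real_diff[symmetric] simp del: complex_cnj_diff of_real_diff\<close>)
  have "norm ((a * b * cnj b - a' * b' * cnj b') - (a * c * cnj c - a' * c' * cnj c') +
      ((\<i> * of_real x) * cnj b * cnj c - (\<i> * of_real x') * cnj b' * cnj c')) \<le>
      3 * R\<^sup>2 * D + 3 * R\<^sup>2 * D + 3 * R\<^sup>2 * D"
    using 1 2 3 norm_triangle_ineq4 norm_triangle_ineq by (smt (verit))
  then show ?thesis unfolding eq by (simp add: algebra_simps)
qed

lemma Gv_lip: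
  assumes "norm p \<le> R" "norm q \<le> R"
  shows "norm (Gv p - Gv q) \<le> 36 * R\<^sup>2 * norm (p - q)"
proof -
  obtain x z1 z2 z3 where p: "p = (x, z1, z2, z3)" by (cases p) auto
  obtain y w1 w2 w3 where q: "q = (y, w1, w2, w3)" by (cases q) auto
  define D where "D = norm (p - q)"
  have n: "\<bar>x\<bar> \<le> R" "norm z1 \<le> R" "norm z2 \<le> R" "norm z3 \<le> R"
          "\<bar>y\<bar> \<le> R" "norm w1 \<le> R" "norm w2 \<le> R" "norm w3 \<le> R"
    using assms comp_norms[where a=x and b=z1 and c=z2 and d=z3] comp_norms[where a=y and b=w1 and c=w2 and d=w3] unfolding p q by (auto simp del: norm_of_real)
  have dd: "\<bar>x - y\<bar> \<le> D" "norm (z1 - w1) \<le> D" "norm (z2 - w2) \<le> D" "norm (z3 - w3) \<le> D"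
    using comp_norms[where a="x - y" and b="z1 - w1" and c="z2 - w2" and d="z3 - w3"] unfolding D_def p q by auto
  have c1: "norm (fst (Gv p) - fst (Gv q)) \<le> 9 * R\<^sup>2 * D"
  proof -
    have "norm (z1 * z2 * z3 - w1 * w2 * w3) \<le> 3 * R\<^sup>2 * D" by (rule triple_lip) (use n dd in auto)
    moreover have "\<bar>Im (z1 * z2 * z3) - Im (w1 * w2 * w3)\<bar> \<le> norm (z1 * z2 * z3 - w1 * w2 * w3)"
      using abs_Im_le_cmod[of "z1 * z2 * z3 - w1 * w2 * w3"] by simp
    ultimately show ?thesis unfolding p q Gv_def by simp
  qed
  have c2: "norm (fst (snd (Gv p)) - fst (snd (Gv q))) \<le> 9 * R\<^sup>2 * D"
    unfolding p q Gv_def of_real_cmod_sq by (simp only: prod.case fst_conv snd_conv) (rule comp_lip; use n dd in auto)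
  have c3: "norm (fst (snd (snd (Gv p))) - fst (snd (snd (Gv q)))) \<le> 9 * R\<^sup>2 * D"
    unfolding p q Gv_def of_real_cmod_sq by (simp only: prod.case fst_conv snd_conv) (rule comp_lip; use n dd in auto)
  have c4: "norm (snd (snd (snd (Gv p))) - snd (snd (snd (Gv q)))) \<le> 9 * R\<^sup>2 * D"
    unfolding p q Gv_def of_real_cmod_sq by (simp only: prod.case fst_conv snd_conv) (rule comp_lip; use n dd in auto)
  have "Gv p - Gv q = (fst (Gv p) - fst (Gv q), fst (snd (Gv p)) - fst (snd (Gv q)),
      fst (snd (snd (Gv p))) - fst (snd (snd (Gv q))), snd (snd (snd (Gv p))) - snd (snd (snd (Gv q))))"
    by (simp add: prod_eq_iff)
  then have "norm (Gv p - Gv q) \<le> norm (fst (Gv p) - fst (Gv q)) + norm (fst (snd (Gv p)) - fst (snd (Gv q)))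
      + norm (fst (snd (snd (Gv p))) - fst (snd (snd (Gv q)))) + norm (snd (snd (snd (Gv p))) - snd (snd (snd (Gv q))))"
    using norm4_le by metis
  then have "norm (Gv p - Gv q) \<le> 9 * R\<^sup>2 * D + 9 * R\<^sup>2 * D + 9 * R\<^sup>2 * D + 9 * R\<^sup>2 * D"
    using c1 c2 c3 c4 by linarith
  then show ?thesis unfolding D_def by (simp add: mult_ac)
qed

lemma gronwall_zero:
  fixes e e' :: "real \<Rightarrow> real"
  assumes I: "is_interval I" and t0: "t0 \<in> I"
    and d: "\<And>t. t \<in> I \<Longrightarrow> (e has_real_derivative e' t) (at t)"
    and b: "\<And>t. t \<in> I \<Longrightarrow> \<bar>e' t\<bar> \<le> C * e t"
    and nn: "\<And>t. t \<in> I \<Longrightarrow> 0 \<le> e t" and z: "e t0 = 0" and t: "t \<in> I"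
  shows "e t = 0"
proof (cases "t0 \<le> t")
  case True
  have "e t * exp (- C * t) \<le> e t0 * exp (- C * t0)"
  proof (rule DERIV_nonpos_imp_nonincreasing[OF True])
    fix x assume "t0 \<le> x" "x \<le> t"
    then have x: "x \<in> I" using mem_is_interval_1_I[OF I t0 t] by blast
    have ex: "((\<lambda>s. exp (- C * s)) has_real_derivative exp (- C * x) * (- C)) (at x)"
      by (auto intro!: derivative_eq_intros)
    have "e' x * exp (- C * x) + exp (- C * x) * (- C) * e x = (e' x - C * e x) * exp (- C * x)"
      by (simp add: algebra_simps)
    also have "\<dots> \<le> 0" using b[OF x] by (intro mult_nonpos_nonneg) auto
    finally show "\<exists>y. ((\<lambda>s. e s * exp (- C * s)) has_real_derivative y) (at x) \<and> y \<le> 0"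
      using DERIV_mult[OF d[OF x] ex] by blast
  qed
  then have "e t * exp (- C * t) \<le> 0" using z by simp
  then have "e t \<le> 0" by (simp add: mult_le_0_iff)
  then show ?thesis using nn[OF t] by simp
next
  case False
  then have le: "t \<le> t0" by simp
  have "e t * exp (C * t) \<le> e t0 * exp (C * t0)"
  proof (rule DERIV_nonneg_imp_nondecreasing[OF le])
    fix x assume "t \<le> x" "x \<le> t0"
    then have x: "x \<in> I" using mem_is_interval_1_I[OF I t t0] by blast
    have ex: "((\<lambda>s. exp (C * s)) has_real_derivative exp (C * x) * C) (at x)"
      by (auto intro!: derivative_eq_intros)
    have "e' x * exp (C * x) + exp (C * x) * C * e x = (e' x + C * e x) * exp (C * x)"
      by (simp add: algebra_simps)
    moreover have "0 \<le> (e' x + C * e x) * exp (C * x)" using b[OF x] by (intro mult_nonneg_nonneg) auto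
    ultimately show "\<exists>y. ((\<lambda>s. e s * exp (C * s)) has_real_derivative y) (at x) \<and> 0 \<le> y"
      using DERIV_mult[OF d[OF x] ex] by auto
  qed
  then have "e t * exp (C * t) \<le> 0" using z by simp
  then have "e t \<le> 0" by (simp add: mult_le_0_iff)
  then show ?thesis using nn[OF t] by simp
qed

lemma Gv_norm_const:
  assumes I: "is_interval I" and d: "\<And>t. t\<in>I \<Longrightarrow> (U has_vector_derivative Gv (U t)) (at t)"
    and "t0 \<in> I" "t \<in> I"
  shows "norm (U t) = norm (U t0)"
proof -
  have "\<exists>c. \<forall>x\<in>I. inner (U x) (U x) = c"
  proof (rule has_derivative_zero_constant)
    show "convex I" using I by (simp add: is_interval_convex)
    fix x assume x: "x \<in> I"
    have dx: "(U has_derivative (\<lambda>h. h *\<^sub>R Gv (U x))) (at x within I)"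
      using d[OF x] unfolding has_vector_derivative_def by (rule has_derivative_at_withinI)
    have "((\<lambda>x. inner (U x) (U x)) has_derivative
         (\<lambda>h. inner (U x) (h *\<^sub>R Gv (U x)) + inner (h *\<^sub>R Gv (U x)) (U x))) (at x within I)"
      by (rule has_derivative_inner[OF dx dx])
    moreover have "(\<lambda>h. inner (U x) (h *\<^sub>R Gv (U x)) + inner (h *\<^sub>R Gv (U x)) (U x)) = (\<lambda>h. 0)"
      using inner_Gv[of "U x"] by (simp add: inner_commute)
    ultimately show "((\<lambda>x. inner (U x) (U x)) has_derivative (\<lambda>h. 0)) (at x within I)" by simp
  qed
  then have "inner (U t) (U t) = inner (U t0) (U t0)" using assms by auto
  then show ?thesis by (simp add: norm_eq_sqrt_inner)
qed

lemma Gv_unique: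
  assumes I: "is_interval I" and t0: "t0 \<in> I"
    and dU: "\<And>t. t\<in>I \<Longrightarrow> (U has_vector_derivative Gv (U t)) (at t)"
    and dW: "\<And>t. t\<in>I \<Longrightarrow> (W has_vector_derivative Gv (W t)) (at t)"
    and eq: "U t0 = W t0" and t: "t \<in> I"
  shows "U t = W t"
proof -
  define R where "R = norm (U t0)"
  have nU: "\<And>s. s \<in> I \<Longrightarrow> norm (U s) \<le> R" using Gv_norm_const[OF I dU t0] R_def by simp
  have nW: "\<And>s. s \<in> I \<Longrightarrow> norm (W s) \<le> R" using Gv_norm_const[OF I dW t0] R_def eq by simp
  define e where "e = (\<lambda>s. inner (U s - W s) (U s - W s))"
  define e' where "e' = (\<lambda>s. 2 * inner (U s - W s) (Gv (U s) - Gv (W s)))"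
  have "e t = 0"
  proof (rule gronwall_zero[OF I t0, where e=e and e' = e' and C = "2 * (36 * R\<^sup>2)" and t=t])
    fix s assume s: "s \<in> I"
    have dd: "((\<lambda>s. U s - W s) has_derivative (\<lambda>h. h *\<^sub>R (Gv (U s) - Gv (W s)))) (at s)"
      using has_vector_derivative_diff[OF dU[OF s] dW[OF s]] unfolding has_vector_derivative_def by simp
    have "(e has_derivative (\<lambda>h. inner (U s - W s) (h *\<^sub>R (Gv (U s) - Gv (W s))) +
          inner (h *\<^sub>R (Gv (U s) - Gv (W s))) (U s - W s))) (at s)"
      unfolding e_def by (rule has_derivative_inner[OF dd dd])
    moreover have "(\<lambda>h. inner (U s - W s) (h *\<^sub>R (Gv (U s) - Gv (W s))) +
          inner (h *\<^sub>R (Gv (U s) - Gv (W s))) (U s - W s)) = (*) (e' s)"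
      unfolding e'_def by (auto simp: inner_commute algebra_simps)
    ultimately show "(e has_real_derivative e' s) (at s)"
      by (simp add: has_field_derivative_def)
    have "\<bar>e' s\<bar> \<le> 2 * (norm (U s - W s) * norm (Gv (U s) - Gv (W s)))"
      unfolding e'_def using Cauchy_Schwarz_ineq2 by (simp add: abs_mult)
    also have "\<dots> \<le> 2 * (norm (U s - W s) * (36 * R\<^sup>2 * norm (U s - W s)))"
      using Gv_lip[OF nU[OF s] nW[OF s]] by (intro mult_left_mono) auto
    also have "\<dots> = 2 * (36 * R\<^sup>2) * e s"
      unfolding e_def by (simp add: power2_norm_eq_inner[symmetric] power2_eq_square)
    finally show "\<bar>e' s\<bar> \<le> 2 * (36 * R\<^sup>2) * e s" .
    show "0 \<le> e s" unfolding e_def by simp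
  next
    show "e t0 = 0" unfolding e_def using eq by simp
  qed (rule t)
  then show ?thesis unfolding e_def by simp
qed

lemma exp_int:
  fixes L d x :: real assumes "0 \<le> x"
  shows "((\<lambda>s. L * exp (2 * L * s) * d) has_integral (d * (exp (2 * L * x) - 1) / 2)) {0..x}"
proof -
  have "((\<lambda>s. L * exp (2 * L * s) * d) has_integral ((\<lambda>s. d * exp (2 * L * s) / 2) x - (\<lambda>s. d * exp (2 * L * s) / 2) 0)) {0..x}"
  proof (rule fundamental_theorem_of_calculus[OF assms])
    fix s assume "s \<in> {0..x}"
    show "((\<lambda>s. d * exp (2 * L * s) / 2) has_vector_derivative L * exp (2 * L * s) * d) (at s within {0..x})"
      unfolding has_real_derivative_iff_has_vector_derivative[symmetric]
      by (auto intro!: derivative_eq_intros simp: algebra_simps)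
  qed
  then show ?thesis by (simp add: field_simps)
qed

lemma picard_forward:
  fixes F :: "'a::euclidean_space \<Rightarrow> 'a" and u0 :: 'a
  assumes L: "0 < L" and lip: "\<And>x y. norm (F x - F y) \<le> L * norm (x - y)"
  shows "\<exists>f. f 0 = u0 \<and> (\<forall>T t. 0 \<le> t \<longrightarrow> t \<le> T \<longrightarrow> (f has_vector_derivative F (f t)) (at t within {0..T}))"
proof -
  have contF: "continuous_on UNIV F"
    by (rule lipschitz_on_continuous_on[of L]) (use lip L in \<open>auto simp: lipschitz_on_def dist_norm\<close>)
  define w where "w = (\<lambda>s::real. exp (2 * L * s))"
  define h where "h = (\<lambda>(g::real \<Rightarrow> 'a) s. F (w s *\<^sub>R g s))"
  define \<Phi>0 where "\<Phi>0 = (\<lambda>g t. exp (-2 * L * max 0 t) *\<^sub>R (u0 + integral {0..max 0 t} (h g)))"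
  have conth: "continuous_on UNIV (h g)" if "continuous_on UNIV g" for g
    unfolding h_def w_def
    by (rule continuous_on_compose2[OF contF]) (auto intro!: continuous_intros that)
  have intI: "(h g) integrable_on {a..b}" if "continuous_on UNIV g" for g a b
    by (rule integrable_continuous_real) (rule continuous_on_subset[OF conth[OF that]], auto)
  have est: "norm (\<Phi>0 g1 t - \<Phi>0 g2 t) \<le> d / 2"
    if g: "continuous_on UNIV g1" "continuous_on UNIV g2" "\<And>s. norm (g1 s - g2 s) \<le> d" for g1 g2 d t
  proof -
    define c where "c = max 0 t"
    have c: "0 \<le> c" unfolding c_def by simp
    have d0: "0 \<le> d" using that(3)[of 0] norm_ge_zero order_trans by blast
    have "norm (integral {0..c} (h g1) - integral {0..c} (h g2)) = norm (integral {0..c} (\<lambda>s. h g1 s - h g2 s))"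
      using intI[OF g(1)] intI[OF g(2)] by (simp add: integral_diff)
    also have "\<dots> \<le> integral {0..c} (\<lambda>s. L * exp (2 * L * s) * d)"
    proof (rule Henstock_Kurzweil_Integration.integral_norm_bound_integral)
      show "(\<lambda>s. h g1 s - h g2 s) integrable_on {0..c}" using intI[OF g(1)] intI[OF g(2)] by (rule integrable_diff)
      show "(\<lambda>s. L * exp (2 * L * s) * d) integrable_on {0..c}" using exp_int[OF c] by blast
      fix s assume "s \<in> {0..c}"
      have "norm (h g1 s - h g2 s) \<le> L * norm (w s *\<^sub>R g1 s - w s *\<^sub>R g2 s)" unfolding h_def by (rule lip)
      also have "\<dots> = L * (w s * norm (g1 s - g2 s))"
        by (simp add: w_def scaleR_diff_right[symmetric] del: scaleR_diff_right)
      also have "\<dots> \<le> L * (w s * d)" using that(3)[of s] L by (intro mult_left_mono) (auto simp: w_def)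
      finally show "norm (h g1 s - h g2 s) \<le> L * exp (2 * L * s) * d" by (simp add: w_def mult_ac)
    qed
    also have "\<dots> = d * (exp (2 * L * c) - 1) / 2" using exp_int[OF c] by (rule integral_unique)
    finally have I: "norm (integral {0..c} (h g1) - integral {0..c} (h g2)) \<le> d * (exp (2 * L * c) - 1) / 2" .
    have "\<Phi>0 g1 t - \<Phi>0 g2 t = exp (-2 * L * c) *\<^sub>R (integral {0..c} (h g1) - integral {0..c} (h g2))"
      unfolding \<Phi>0_def c_def by (simp add: algebra_simps)
    then have "norm (\<Phi>0 g1 t - \<Phi>0 g2 t) = exp (-2 * L * c) * norm (integral {0..c} (h g1) - integral {0..c} (h g2))"
      by simp
    also have "\<dots> \<le> exp (-2 * L * c) * (d * (exp (2 * L * c) - 1) / 2)" using I by (intro mult_left_mono) auto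
    also have "\<dots> = d/2 - d/2 * exp (-2 * L * c)"
    proof -
      have e: "exp (-2 * L * c) * exp (2 * L * c) = 1" by (simp add: exp_add[symmetric])
      have gen: "\<And>a b::real. a * (d * (b - 1) / 2) = d * (a * b) / 2 - d / 2 * a"
        by (simp add: field_simps)
      show ?thesis using gen[of "exp (-2 * L * c)" "exp (2 * L * c)"] unfolding e by simp
    qed
    also have "\<dots> \<le> d/2" using d0 by simp
    finally show ?thesis .
  qed
  have contPhi: "continuous_on UNIV (\<Phi>0 g)" if g: "continuous_on UNIV g" for g
  proof -
    have "isCont (\<Phi>0 g) t" for t
    proof -
      define T where "T = \<bar>t\<bar> + 1"
      have ci: "continuous_on {0..T} (\<lambda>x. integral {0..x} (h g))"
        by (rule indefinite_integral_continuous_1[OF intI[OF g]])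
      have m: "continuous_on {..<T} (\<lambda>t. integral {0..max 0 t} (h g))"
        by (rule continuous_on_compose2[OF ci]) (auto intro!: continuous_intros simp: T_def)
      have "continuous_on {..<T} (\<Phi>0 g)"
        unfolding \<Phi>0_def by (intro continuous_intros m)
      moreover have "t \<in> {..<T}" unfolding T_def by auto
      ultimately show ?thesis using continuous_on_eq_continuous_at[of "{..<T}"] by auto
    qed
    then show ?thesis by (intro continuous_at_imp_continuous_on) auto
  qed
  have bdd: "bounded (range (\<Phi>0 (apply_bcontfun g)))" for g
  proof -
    obtain B where B: "\<And>s. norm (apply_bcontfun g s) \<le> B"
      using bounded_apply_bcontfun[of g] unfolding bounded_iff by auto
    have "norm (\<Phi>0 (apply_bcontfun g) t) \<le> B/2 + (norm u0 + norm (F 0) / (2 * L))" for t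
    proof -
      define c where "c = max 0 t"
      have c: "0 \<le> c" unfolding c_def by simp
      have 1: "norm (\<Phi>0 (apply_bcontfun g) t - \<Phi>0 (\<lambda>_. 0) t) \<le> B/2"
        by (rule est) (use B in auto)
      have h0: "h (\<lambda>_. 0) = (\<lambda>s. F 0)" unfolding h_def by simp
      have "\<Phi>0 (\<lambda>_. 0) t = exp (-2 * L * c) *\<^sub>R (u0 + c *\<^sub>R F 0)"
        unfolding \<Phi>0_def h0 c_def by simp
      then have "norm (\<Phi>0 (\<lambda>_. 0) t) \<le> exp (-2 * L * c) * (norm u0 + c * norm (F 0))"
        using c norm_triangle_ineq[of u0 "c *\<^sub>R F 0"] by (simp add: mult_left_mono)
      also have "\<dots> \<le> 1 * norm u0 + (1 / (2 * L)) * norm (F 0)"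
      proof -
        have a: "exp (-2 * L * c) \<le> 1" using c L by simp
        have "2 * L * c \<le> exp (2 * L * c)" using exp_ge_add_one_self[of "2 * L * c"] by linarith
        then have "2 * L * c * exp (-2 * L * c) \<le> exp (2 * L * c) * exp (-2 * L * c)" by (intro mult_right_mono) auto
        also have "\<dots> = 1" by (simp add: exp_add[symmetric])
        finally have "c * exp (-2 * L * c) \<le> 1 / (2 * L)" using L by (simp add: field_simps)
        then have 2: "(c * exp (-2 * L * c)) * norm (F 0) \<le> (1 / (2 * L)) * norm (F 0)"
          by (rule mult_right_mono) simp
        have 1: "exp (-2 * L * c) * norm u0 \<le> 1 * norm u0" by (rule mult_right_mono[OF a]) simp
        have "exp (-2 * L * c) * (norm u0 + c * norm (F 0)) = exp (-2 * L * c) * norm u0 + (c * exp (-2 * L * c)) * norm (F 0)"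
          by (simp add: algebra_simps)
        then show ?thesis using 1 2 by linarith
      qed
      finally show ?thesis using 1 norm_triangle_ineq2[of "\<Phi>0 (apply_bcontfun g) t" "\<Phi>0 (\<lambda>_. 0) t"] by simp
    qed
    then show ?thesis unfolding bounded_iff by blast
  qed
  define \<Phi> where "\<Phi> = (\<lambda>g::real \<Rightarrow>\<^sub>C 'a. Bcontfun (\<Phi>0 (apply_bcontfun g)))"
  have mem: "\<Phi>0 (apply_bcontfun g) \<in> bcontfun" for g
    unfolding bcontfun_def using contPhi[of "apply_bcontfun g"] bdd[of g] by auto
  have app: "apply_bcontfun (\<Phi> g) = \<Phi>0 (apply_bcontfun g)" for g
    unfolding \<Phi>_def using mem by (simp add: Bcontfun_inverse)
  have contr: "\<forall>g1 g2. dist (\<Phi> g1) (\<Phi> g2) \<le> 1/2 * dist g1 g2"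
  proof (intro allI)
    fix g1 g2
    show "dist (\<Phi> g1) (\<Phi> g2) \<le> 1/2 * dist g1 g2"
    proof (rule dist_bound)
      fix t
      have "norm (\<Phi>0 (apply_bcontfun g1) t - \<Phi>0 (apply_bcontfun g2) t) \<le> dist g1 g2 / 2"
        by (rule est) (use dist_bounded[of g1 _ g2] in \<open>auto simp: dist_norm\<close>)
      then show "dist (apply_bcontfun (\<Phi> g1) t) (apply_bcontfun (\<Phi> g2) t) \<le> 1/2 * dist g1 g2"
        by (simp add: app dist_norm)
    qed
  qed
  obtain gs where gs: "\<Phi> gs = gs" using banach_fix_type[of "1/2" \<Phi>] contr by auto
  have fixpt: "\<Phi>0 (apply_bcontfun gs) t = apply_bcontfun gs t" for t using app[of gs] gs by metis
  define f where "f = (\<lambda>t. u0 + integral {0..t} (h gs))"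
  have fw: "w t *\<^sub>R apply_bcontfun gs t = f t" if "0 \<le> t" for t
  proof -
    have "apply_bcontfun gs t = exp (-2 * L * t) *\<^sub>R (u0 + integral {0..t} (h gs))"
      using fixpt[of t] that unfolding \<Phi>0_def by simp
    then have "w t *\<^sub>R apply_bcontfun gs t = (exp (2 * L * t) * exp (-2 * L * t)) *\<^sub>R (u0 + integral {0..t} (h gs))"
      by (simp add: w_def)
    also have "exp (2 * L * t) * exp (-2 * L * t) = 1" by (simp add: exp_add[symmetric])
    finally show ?thesis by (simp add: f_def)
  qed
  show ?thesis
  proof (intro exI conjI allI impI)
    show "f 0 = u0" by (simp add: f_def)
    fix T t :: real assume t: "0 \<le> t" "t \<le> T"
    have "((\<lambda>u. integral {0..u} (h gs)) has_vector_derivative h gs t) (at t within {0..T})"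
      by (rule integral_has_vector_derivative) (use conth[of "apply_bcontfun gs"] t in \<open>auto intro: continuous_on_subset\<close>)
    then have "(f has_vector_derivative h gs t) (at t within {0..T})"
      unfolding f_def by (intro derivative_eq_intros) auto
    moreover have "h gs t = F (f t)" unfolding h_def using fw[OF t(1)] by simp
    ultimately show "(f has_vector_derivative F (f t)) (at t within {0..T})" by simp
  qed
qed

definition prj :: "real \<Rightarrow> R7 \<Rightarrow> R7" where
  "prj R p = (if norm p \<le> R then p else (R / norm p) *\<^sub>R p)"

lemma prj_norm: "0 < R \<Longrightarrow> norm (prj R p) \<le> R"
  by (auto simp: prj_def)

lemma prj_id: "norm p \<le> R \<Longrightarrow> prj R p = p"
  by (simp add: prj_def)

lemma prj_out_dist: assumes "0 < R" "\<not> norm p \<le> R" shows "norm (prj R p - p) = norm p - R"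
proof -
  have np: "0 < norm p" using assms by auto
  have "prj R p - p = (R / norm p - 1) *\<^sub>R p" by (simp add: prj_def assms algebra_simps)
  then have "norm (prj R p - p) = \<bar>R / norm p - 1\<bar> * norm p" by simp
  also have "\<bar>R / norm p - 1\<bar> = 1 - R / norm p" using assms np by (simp add: field_simps)
  also have "(1 - R / norm p) * norm p = norm p - R" using np by (simp add: field_simps)
  finally show ?thesis .
qed

lemma prj_lip_half:
  assumes R: "0 < R" and p: "\<not> norm p \<le> R" and q: "norm q \<le> R"
  shows "norm (prj R p - prj R q) \<le> 2 * norm (p - q)"
proof -
  have "norm (prj R p - prj R q) = norm ((prj R p - p) + (p - q))" using q by (simp add: prj_id)
  also have "\<dots> \<le> norm (prj R p - p) + norm (p - q)" by (rule norm_triangle_ineq)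
  also have "norm (prj R p - p) = norm p - R" by (rule prj_out_dist[OF R p])
  also have "norm p - R \<le> norm (p - q)" using q norm_triangle_ineq2[of p q] by linarith
  finally show ?thesis by simp
qed

lemma prj_lip: assumes R: "0 < R" shows "norm (prj R p - prj R q) \<le> 2 * norm (p - q)"
proof (cases "norm p \<le> R")
  case pin: True
  show ?thesis
  proof (cases "norm q \<le> R")
    case True then show ?thesis using pin by (simp add: prj_id)
  next
    case False
    then have "norm (prj R q - prj R p) \<le> 2 * norm (q - p)" by (rule prj_lip_half[OF R _ pin])
    then show ?thesis by (simp add: norm_minus_commute)
  qed
next
  case pout: False
  show ?thesis
  proof (cases "norm q \<le> R")
    case True then show ?thesis by (rule prj_lip_half[OF R pout])
  next
    case qout: False
    define a where "a = R / norm p"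
    define b where "b = R / norm q"
    have np: "0 < norm p" and nq: "0 < norm q" using pout qout R by auto
    have a1: "0 \<le> a" "a \<le> 1" using pout np R by (auto simp: a_def field_simps)
    have e: "prj R p - prj R q = a *\<^sub>R (p - q) + (a - b) *\<^sub>R q"
      using pout qout by (simp add: prj_def a_def b_def algebra_simps)
    have 1: "norm (a *\<^sub>R (p - q)) \<le> norm (p - q)" using a1 by (simp add: mult_left_le_one_le)
    have "norm ((a - b) *\<^sub>R q) = \<bar>a - b\<bar> * norm q" by simp
    also have "\<bar>a - b\<bar> * norm q = a * \<bar>norm q - norm p\<bar>"
    proof -
      have "(a - b) * norm q = a * (norm q - norm p)"
        using np nq by (simp add: a_def b_def field_simps)
      then have "\<bar>a - b\<bar> * norm q = \<bar>a * (norm q - norm p)\<bar>" using nq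
        by (metis abs_mult abs_of_pos)
      then show ?thesis using a1 by (simp add: abs_mult)
    qed
    also have "\<dots> \<le> 1 * norm (p - q)"
      using a1 norm_triangle_ineq3[of q p] by (intro mult_mono) (auto simp: norm_minus_commute)
    finally have 2: "norm ((a - b) *\<^sub>R q) \<le> norm (p - q)" by simp
    show ?thesis unfolding e using 1 2 norm_triangle_ineq[of "a *\<^sub>R (p - q)" "(a - b) *\<^sub>R q"] by linarith
  qed
qed

lemma prj_scale: assumes "0 < R" shows "\<exists>c. c \<noteq> 0 \<and> prj R p = c *\<^sub>R p"
proof (cases "norm p \<le> R")
  case True then show ?thesis by (intro exI[of _ 1]) (simp add: prj_def)
next
  case False
  then have "R / norm p \<noteq> 0" using assms by auto
  then show ?thesis using False by (intro exI[of _ "R / norm p"]) (simp add: prj_def)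
qed

lemma inner_Gv_scaled: "c \<noteq> 0 \<Longrightarrow> inner p (Gv (c *\<^sub>R p)) = 0"
  using inner_Gv[of "c *\<^sub>R p"] by simp

lemma inner_Gv_prj: "0 < R \<Longrightarrow> inner p (Gv (prj R p)) = 0"
  using prj_scale[of R p] inner_Gv_scaled by metis

lemma Gv_prj_lip:
  assumes R: "0 < R"
  shows "norm (Gv (prj R p) - Gv (prj R q)) \<le> (72 * R\<^sup>2 + 1) * norm (p - q)"
proof -
  have "norm (Gv (prj R p) - Gv (prj R q)) \<le> 36 * R\<^sup>2 * norm (prj R p - prj R q)"
    by (rule Gv_lip[OF prj_norm[OF R] prj_norm[OF R]])
  also have "\<dots> \<le> 36 * R\<^sup>2 * (2 * norm (p - q))" by (intro mult_left_mono prj_lip[OF R]) auto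
  also have "\<dots> \<le> (72 * R\<^sup>2 + 1) * norm (p - q)" by (simp add: algebra_simps)
  finally show ?thesis .
qed

lemma fwd_norm:
  fixes F :: "R7 \<Rightarrow> R7"
  assumes f0: "f 0 = u0" and d: "\<forall>T t. 0 \<le> t \<longrightarrow> t \<le> T \<longrightarrow> (f has_vector_derivative F (f t)) (at t within {0..T})"
    and inn: "\<And>p. inner p (F p) = 0" and t: "0 \<le> t"
  shows "norm (f t) = norm u0"
proof -
  have "\<exists>c. \<forall>x\<in>{0..t}. inner (f x) (f x) = c"
  proof (rule has_derivative_zero_constant)
    show "convex {0..t}" by simp
    fix x assume x: "x \<in> {0..t}"
    have dx: "(f has_derivative (\<lambda>h. h *\<^sub>R F (f x))) (at x within {0..t})"
      using d x unfolding has_vector_derivative_def by auto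
    have "((\<lambda>x. inner (f x) (f x)) has_derivative
         (\<lambda>h. inner (f x) (h *\<^sub>R F (f x)) + inner (h *\<^sub>R F (f x)) (f x))) (at x within {0..t})"
      by (rule has_derivative_inner[OF dx dx])
    moreover have "(\<lambda>h. inner (f x) (h *\<^sub>R F (f x)) + inner (h *\<^sub>R F (f x)) (f x)) = (\<lambda>h. 0)"
      using inn[of "f x"] by (simp add: inner_commute)
    ultimately show "((\<lambda>x. inner (f x) (f x)) has_derivative (\<lambda>h. 0)) (at x within {0..t})" by simp
  qed
  then have "inner (f t) (f t) = inner (f 0) (f 0)" using t by auto
  then show ?thesis using f0 by (simp add: norm_eq_sqrt_inner)
qed

lemma hvd_Un:
  "(f has_vector_derivative f') (at x within S) \<Longrightarrow> (f has_vector_derivative f') (at x within T) \<Longrightarrow>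
   (f has_vector_derivative f') (at x within S \<union> T)"
  unfolding has_vector_derivative_def has_derivative_within by (auto simp: Lim_within_Un)

lemma glue_deriv:
  assumes fp0: "fp 0 = u0" and fp: "\<forall>T t. 0 \<le> t \<longrightarrow> t \<le> T \<longrightarrow> (fp has_vector_derivative Gv (fp t)) (at t within {0..T})"
    and fm0: "fm 0 = u0" and fm: "\<forall>T t. 0 \<le> t \<longrightarrow> t \<le> T \<longrightarrow> (fm has_vector_derivative - Gv (fm t)) (at t within {0..T})"
  defines "u \<equiv> (\<lambda>t. if 0 \<le> t then fp t else fm (- t))"
  shows "(u has_vector_derivative Gv (u t)) (at t)"
proof -
  have fpat: "(fp has_vector_derivative Gv (fp s)) (at s)" if "0 < s" for s
  proof -
    have i: "s \<in> interior {0..s+1}" using that by (simp add: interior_atLeastAtMost_real)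
    have "(fp has_vector_derivative Gv (fp s)) (at s within {0..s+1})" using fp that by simp
    then show ?thesis unfolding at_within_interior[OF i] .
  qed
  have fmat: "(fm has_vector_derivative - Gv (fm s)) (at s)" if "0 < s" for s
  proof -
    have i: "s \<in> interior {0..s+1}" using that by (simp add: interior_atLeastAtMost_real)
    have "(fm has_vector_derivative - Gv (fm s)) (at s within {0..s+1})" using fm that by simp
    then show ?thesis unfolding at_within_interior[OF i] .
  qed
  consider "0 < t" | "t < 0" | "t = 0" by linarith
  then show ?thesis
  proof cases
    case 1
    have "(u has_vector_derivative Gv (fp t)) (at t)"
      by (rule has_vector_derivative_transform_within_open[OF fpat[OF 1], of "{0<..}"]) (use 1 in \<open>auto simp: u_def\<close>)
    then show ?thesis using 1 by (simp add: u_def)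
  next
    case 2
    have "((fm \<circ> uminus) has_vector_derivative ((-1) *\<^sub>R (- Gv (fm (- t))))) (at t)"
      by (rule vector_diff_chain_at) (auto intro!: derivative_eq_intros fmat simp: 2)
    then have "((\<lambda>s. fm (- s)) has_vector_derivative Gv (u t)) (at t)"
      using 2 by (simp add: u_def o_def)
    then show ?thesis
      by (rule has_vector_derivative_transform_within_open[of _ _ _ "{..<0}"]) (use 2 in \<open>auto simp: u_def\<close>)
  next
    case 3
    have fp00: "(fp has_vector_derivative Gv (fp 0)) (at 0 within {0..1})" using fp by simp
    have fm00: "(fm has_vector_derivative - Gv (fm 0)) (at 0 within {0..1})" using fm by simp
    have r: "(u has_vector_derivative Gv u0) (at 0 within {0..1})"
      by (rule has_vector_derivative_transform[of 0 "{0..1}" u fp]) (use fp00 fp0 in \<open>auto simp: u_def\<close>)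
    have im: "uminus ` {-1..0::real} = {0..1}" by auto
    have "((fm \<circ> uminus) has_vector_derivative ((-1) *\<^sub>R (- Gv (fm 0)))) (at 0 within {-1..0})"
      by (rule vector_diff_chain_within) (use fm00 in \<open>auto intro!: derivative_eq_intros simp: im\<close>)
    then have "((\<lambda>s. fm (- s)) has_vector_derivative Gv u0) (at 0 within {-1..0})"
      using fm0 by (simp add: o_def)
    then have l: "(u has_vector_derivative Gv u0) (at 0 within {-1..0})"
      by (rule has_vector_derivative_transform[rotated 2]) (use fm0 fp0 in \<open>auto simp: u_def\<close>)
    have "(u has_vector_derivative Gv u0) (at 0 within {-1..0} \<union> {0..1})" by (rule hvd_Un[OF l r])
    moreover have "{-1..0} \<union> {0..1} = {-1..1::real}" by auto
    moreover have "(0::real) \<in> interior {-1..1}" by auto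
    ultimately have "(u has_vector_derivative Gv u0) (at 0)" using at_within_interior[of 0 "{-1..1::real}"] by simp
    then show ?thesis using 3 fp0 by (simp add: u_def)
  qed
qed

lemma global_exists: "\<exists>U. U 0 = u0 \<and> (\<forall>t. (U has_vector_derivative Gv (U t)) (at t))"
proof -
  define R where "R = norm u0 + 1"
  have R: "0 < R" unfolding R_def by (simp add: add_nonneg_pos)
  have L: "0 < 72 * R\<^sup>2 + 1" by (simp add: add_nonneg_pos)
  have lipM: "norm (- Gv (prj R x) - - Gv (prj R y)) \<le> (72 * R\<^sup>2 + 1) * norm (x - y)" for x y
  proof -
    have "- Gv (prj R x) - - Gv (prj R y) = - (Gv (prj R x) - Gv (prj R y))" by simp
    then show ?thesis using Gv_prj_lip[OF R, of x y] by (simp only: norm_minus_cancel)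
  qed
  obtain fp where fp0: "fp 0 = u0" and fpd: "\<forall>T t. 0 \<le> t \<longrightarrow> t \<le> T \<longrightarrow>
      (fp has_vector_derivative Gv (prj R (fp t))) (at t within {0..T})"
    using picard_forward[where F="\<lambda>p. Gv (prj R p)" and L="72 * R\<^sup>2 + 1", OF L Gv_prj_lip[OF R]]
    by blast
  obtain fm where fm0: "fm 0 = u0" and fmd: "\<forall>T t. 0 \<le> t \<longrightarrow> t \<le> T \<longrightarrow>
      (fm has_vector_derivative - Gv (prj R (fm t))) (at t within {0..T})"
    using picard_forward[where F="\<lambda>p. - Gv (prj R p)" and L="72 * R\<^sup>2 + 1", OF L lipM]
    by blast
  have fpn: "prj R (fp t) = fp t" if "0 \<le> t" for t
    using fwd_norm[OF fp0 fpd _ that] inner_Gv_prj[OF R] R_def by (intro prj_id) auto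
  have fmn: "prj R (fm t) = fm t" if "0 \<le> t" for t
    using fwd_norm[OF fm0 fmd _ that] inner_Gv_prj[OF R] R_def by (intro prj_id) auto
  have fpd': "\<forall>T t. 0 \<le> t \<longrightarrow> t \<le> T \<longrightarrow> (fp has_vector_derivative Gv (fp t)) (at t within {0..T})"
    using fpd fpn by auto
  have fmd': "\<forall>T t. 0 \<le> t \<longrightarrow> t \<le> T \<longrightarrow> (fm has_vector_derivative - Gv (fm t)) (at t within {0..T})"
    using fmd fmn by auto
  show ?thesis
    by (rule exI[of _ "\<lambda>t. if 0 \<le> t then fp t else fm (- t)"])
       (use glue_deriv[OF fp0 fpd' fm0 fmd'] fp0 in auto)
qed

lemma coord_simps: "coord (x1, z1, z2, z3) 1 = x1" "coord (x1, z1, z2, z3) 2 = Re z1" "coord (x1, z1, z2, z3) 3 = Im z1"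
  "coord (x1, z1, z2, z3) 4 = Re z2" "coord (x1, z1, z2, z3) 5 = Im z2" "coord (x1, z1, z2, z3) 6 = Re z3"
  "coord (x1, z1, z2, z3) 7 = Im z3"
  by (simp_all add: coord_def)

lemma coord_add: "coord (u + v) i = coord u i + coord v i"
  by (cases u; cases v) (simp add: coord_def)

lemma coord_scale: "coord (s *\<^sub>R u) i = s * coord u i"
  by (cases u) (simp add: coord_def)

lemma phi0_add1: "phi0 (u + v) b c = phi0 u b c + phi0 v b c"
  unfolding phi0_def dx3_def coord_add by (simp add: algebra_simps)
lemma phi0_add2: "phi0 a (u + v) c = phi0 a u c + phi0 a v c"
  unfolding phi0_def dx3_def coord_add by (simp add: algebra_simps)
lemma phi0_add3: "phi0 a b (u + v) = phi0 a b u + phi0 a b v"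
  unfolding phi0_def dx3_def coord_add by (simp add: algebra_simps)
lemma phi0_scale1: "phi0 (s *\<^sub>R u) b c = s * phi0 u b c"
  unfolding phi0_def dx3_def coord_scale by (simp add: algebra_simps)
lemma phi0_scale2: "phi0 a (s *\<^sub>R u) c = s * phi0 a u c"
  unfolding phi0_def dx3_def coord_scale by (simp add: algebra_simps)
lemma phi0_scale3: "phi0 a b (s *\<^sub>R u) = s * phi0 a b u"
  unfolding phi0_def dx3_def coord_scale by (simp add: algebra_simps)

lemma phi0_alt: "phi0 u u w = 0" "phi0 u w u = 0" "phi0 w u u = 0"
  unfolding phi0_def dx3_def by (simp_all add: algebra_simps)

lemma phi0_swap12: "phi0 b a c = - phi0 a b c"
  unfolding phi0_def dx3_def by (simp add: algebra_simps)
lemma phi0_swap23: "phi0 a c b = - phi0 a b c"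
  unfolding phi0_def dx3_def by (simp add: algebra_simps)

lemma phi0_zero_perms:
  assumes "phi0 a b c = 0"
  shows "phi0 a b c = 0" "phi0 b a c = 0" "phi0 a c b = 0" "phi0 b c a = 0" "phi0 c a b = 0" "phi0 c b a = 0"
  using assms phi0_swap12[of a b c] phi0_swap23[of a b c] phi0_swap12[of a c b] phi0_swap23[of b a c]
    phi0_swap12[of b c a]
  by simp_all

definition omg :: "R7 \<Rightarrow> R7 \<Rightarrow> real" where
  "omg b c = Im (cnj (fst (snd b)) * fst (snd c)) + Im (cnj (fst (snd (snd b))) * fst (snd (snd c)))
     + Im (cnj (snd (snd (snd b))) * snd (snd (snd c)))"

definition det3 :: "R7 \<Rightarrow> R7 \<Rightarrow> R7 \<Rightarrow> complex" where
  "det3 a b c = fst (snd a) * (fst (snd (snd b)) * snd (snd (snd c)) - snd (snd (snd b)) * fst (snd (snd c)))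
     - fst (snd (snd a)) * (fst (snd b) * snd (snd (snd c)) - snd (snd (snd b)) * fst (snd c))
     + snd (snd (snd a)) * (fst (snd b) * fst (snd (snd c)) - fst (snd (snd b)) * fst (snd c))"

lemma phi0_complex: "phi0 a b c = fst a * omg b c - fst b * omg a c + fst c * omg a b + Re (det3 a b c)"
proof -
  obtain a0 a1 a2 a3 where a: "a = (a0, a1, a2, a3)" by (cases a) auto
  obtain b0 b1 b2 b3 where b: "b = (b0, b1, b2, b3)" by (cases b) auto
  obtain c0 c1 c2 c3 where c: "c = (c0, c1, c2, c3)" by (cases c) auto
  show ?thesis unfolding a b c phi0_def dx3_def coord_simps omg_def det3_def
    by (simp add: algebra_simps)
qed

definition rot :: "real \<Rightarrow> real \<Rightarrow> R7 \<Rightarrow> R7" where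
  "rot f1 f2 p = (fst p, cis f1 * fst (snd p), cis f2 * fst (snd (snd p)), cis (- (f1 + f2)) * snd (snd (snd p)))"

lemma cnj_cis_mult: "cnj (cis f) * cis f = 1"
  by (simp add: cis_cnj cis_mult)

lemma omg_rot: "omg (rot f1 f2 b) (rot f1 f2 c) = omg b c"
proof -
  have k: "cnj (u * y) * (u * w) = (cnj u * u) * (cnj y * w)" for u y w :: complex by (simp add: algebra_simps)
  show ?thesis by (simp only: omg_def rot_def fst_conv snd_conv k cnj_cis_mult mult_1_left)
qed

lemma det3_rot: "det3 (rot f1 f2 a) (rot f1 f2 b) (rot f1 f2 c) = det3 a b c"
proof -
  have u: "cis f1 * cis f2 * cis (- (f1 + f2)) = 1" by (simp add: cis_mult)
  have "det3 (rot f1 f2 a) (rot f1 f2 b) (rot f1 f2 c) = (cis f1 * cis f2 * cis (- (f1 + f2))) * det3 a b c"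
    unfolding det3_def rot_def by (simp add: algebra_simps)
  then show ?thesis using u by simp
qed

lemma phi0_rot: "phi0 (rot f1 f2 a) (rot f1 f2 b) (rot f1 f2 c) = phi0 a b c"
  unfolding phi0_complex omg_rot det3_rot by (simp add: rot_def)

lemma base1:
  fixes x :: real and z1 z2 z3 :: complex
  shows "phi0 (x, z1, z2, z3) (0, \<i> * z1, 0, - \<i> * z3) (0, 0, \<i> * z2, - \<i> * z3) = - 3 * Re (z1 * z2 * z3)"
  unfolding phi0_def dx3_def coord_simps by (simp add: algebra_simps)

lemma base2:
  fixes x :: real and z1 z2 z3 :: complex
  shows "phi0 (x, z1, z2, z3) (0, \<i> * z1, 0, - \<i> * z3) (Gv (x, z1, z2, z3)) = 0"
  unfolding phi0_def dx3_def Gv_def prod.case coord_simps cmod_power2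
  by (simp add: algebra_simps power2_eq_square)

lemma base3:
  fixes x :: real and z1 z2 z3 :: complex
  shows "phi0 (x, z1, z2, z3) (0, 0, \<i> * z2, - \<i> * z3) (Gv (x, z1, z2, z3)) = 0"
  unfolding phi0_def dx3_def Gv_def prod.case coord_simps cmod_power2
  by (simp add: algebra_simps power2_eq_square)

lemma base4:
  fixes x :: real and z1 z2 z3 :: complex
  shows "phi0 (0, \<i> * z1, 0, - \<i> * z3) (0, 0, \<i> * z2, - \<i> * z3) (Gv (x, z1, z2, z3)) = 0"
  unfolding phi0_def dx3_def Gv_def prod.case coord_simps cmod_power2
  by (simp add: algebra_simps power2_eq_square)

definition twonz :: "complex \<Rightarrow> complex \<Rightarrow> complex \<Rightarrow> bool" where
  "twonz z1 z2 z3 \<longleftrightarrow> (z1 \<noteq> 0 \<and> z2 \<noteq> 0) \<or> (z1 \<noteq> 0 \<and> z3 \<noteq> 0) \<or> (z2 \<noteq> 0 \<and> z3 \<noteq> 0)"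

lemma Gv_equil: "\<not> twonz z1 z2 z3 \<Longrightarrow> Gv (x, z1, z2, z3) = 0"
proof -
  assume "\<not> twonz z1 z2 z3"
  then have "(z1 = 0 \<and> z2 = 0) \<or> (z1 = 0 \<and> z3 = 0) \<or> (z2 = 0 \<and> z3 = 0)" unfolding twonz_def by blast
  then show ?thesis by (elim disjE conjE) (simp_all add: Gv_def zero_prod_def)
qed

lemma cnj_eq_Re:
  fixes z1 z2 z3 :: complex and a b d x :: real
  shows "Re (cnj z1 * (of_real a * z1 + of_real b * (\<i> * z1) + of_real d *
            (z1 * of_real ((cmod z2)\<^sup>2 - (cmod z3)\<^sup>2) + \<i> * of_real x * cnj (z2 * z3))))
         = a * (cmod z1)\<^sup>2 + d * ((cmod z1)\<^sup>2 * ((cmod z2)\<^sup>2 - (cmod z3)\<^sup>2) + x * Im (z1 * z2 * z3))"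
    and "Im (cnj z1 * (of_real a * z1 + of_real b * (\<i> * z1) + of_real d *
            (z1 * of_real ((cmod z2)\<^sup>2 - (cmod z3)\<^sup>2) + \<i> * of_real x * cnj (z2 * z3))))
         = b * (cmod z1)\<^sup>2 + d * x * Re (z1 * z2 * z3)"
  unfolding cmod_power2 by (simp_all add: algebra_simps power2_eq_square)

lemma indep:
  fixes x :: real and z1 z2 z3 :: complex and a b c d :: real
  assumes re: "Re (z1 * z2 * z3) = 0" and tw: "twonz z1 z2 z3"
    and eq: "a *\<^sub>R (x, z1, z2, z3) + b *\<^sub>R (0, \<i> * z1, 0, - \<i> * z3) + c *\<^sub>R (0, 0, \<i> * z2, - \<i> * z3)
             + d *\<^sub>R Gv (x, z1, z2, z3) = 0"
  shows "a = 0 \<and> b = 0 \<and> c = 0 \<and> d = 0"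
proof -
  define A where "A = (cmod z1)\<^sup>2"
  define B where "B = (cmod z2)\<^sup>2"
  define C where "C = (cmod z3)\<^sup>2"
  define s where "s = Im (z1 * z2 * z3)"
  have e0: "a * x + d * (- 3 * s) = 0" using eq unfolding s_def by (simp add: Gv_def prod_eq_iff)
  have e1: "of_real a * z1 + of_real b * (\<i> * z1) + of_real d *
            (z1 * of_real ((cmod z2)\<^sup>2 - (cmod z3)\<^sup>2) + \<i> * of_real x * cnj (z2 * z3)) = 0"
    using eq by (simp add: Gv_def scaleR_conv_of_real prod_eq_iff)
  have e2: "of_real a * z2 + of_real c * (\<i> * z2) + of_real d *
            (z2 * of_real ((cmod z3)\<^sup>2 - (cmod z1)\<^sup>2) + \<i> * of_real x * cnj (z3 * z1)) = 0"
    using eq by (simp add: Gv_def scaleR_conv_of_real prod_eq_iff)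
  have e3: "of_real a * z3 + of_real (- (b + c)) * (\<i> * z3) + of_real d *
            (z3 * of_real ((cmod z1)\<^sup>2 - (cmod z2)\<^sup>2) + \<i> * of_real x * cnj (z1 * z2)) = 0"
    using eq by (simp add: Gv_def scaleR_conv_of_real algebra_simps prod_eq_iff)
  have w2: "z2 * z3 * z1 = z1 * z2 * z3" "z3 * z1 * z2 = z1 * z2 * z3" by (simp_all add: algebra_simps)
  have R1: "a * A + d * (A * (B - C) + x * s) = 0" and I1: "b * A = 0"
    using cnj_eq_Re(1)[of z1 a b d z2 z3 x, unfolded e1] cnj_eq_Re(2)[of z1 a b d z2 z3 x, unfolded e1] re
    unfolding A_def B_def C_def s_def by simp_all
  have R2: "a * B + d * (B * (C - A) + x * s) = 0" and I2: "c * B = 0"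
    using cnj_eq_Re(1)[of z2 a c d z3 z1 x, unfolded e2] cnj_eq_Re(2)[of z2 a c d z3 z1 x, unfolded e2] re
    unfolding A_def B_def C_def s_def w2 by simp_all
  have R3: "a * C + d * (C * (A - B) + x * s) = 0" and I3: "(- (b + c)) * C = 0"
    using cnj_eq_Re(1)[of z3 a "- (b + c)" d z1 z2 x, unfolded e3] cnj_eq_Re(2)[of z3 a "- (b + c)" d z1 z2 x, unfolded e3] re
    unfolding A_def B_def C_def s_def w2 by simp_all
  have pos: "(0 < A \<and> 0 < B) \<or> (0 < A \<and> 0 < C) \<or> (0 < B \<and> 0 < C)"
    using tw unfolding twonz_def A_def B_def C_def by auto
  have nn: "0 \<le> A" "0 \<le> B" "0 \<le> C" unfolding A_def B_def C_def by auto
  have "a * (A + B + C + x\<^sup>2) = (a * A + d * (A * (B - C) + x * s)) + (a * B + d * (B * (C - A) + x * s))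
        + (a * C + d * (C * (A - B) + x * s)) + x * (a * x + d * (- 3 * s))"
    by (simp add: algebra_simps power2_eq_square)
  then have "a * (A + B + C + x\<^sup>2) = 0" using R1 R2 R3 e0 by simp
  moreover have "0 < A + B + C + x\<^sup>2" using pos nn by (auto intro: add_pos_nonneg)
  ultimately have a0: "a = 0" by simp
  have d0: "d = 0"
  proof (rule ccontr)
    assume dn: "d \<noteq> 0"
    then have s0: "s = 0" using e0 a0 by simp
    have "A * (B - C) = 0" "B * (C - A) = 0" "C * (A - B) = 0" using R1 R2 R3 a0 s0 dn by simp_all
    then have "0 < A \<and> 0 < B \<and> 0 < C" using pos by auto
    then have "z1 * z2 * z3 \<noteq> 0" unfolding A_def B_def C_def by auto
    moreover have "z1 * z2 * z3 = 0" using re s0 unfolding s_def by (simp add: complex_eq_iff)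
    ultimately show False by simp
  qed
  have "b = 0 \<and> c = 0" using I1 I2 I3 pos by auto
  then show ?thesis using a0 d0 by simp
qed

lemma act_eq: "act g (x0, a1, a2, a3) = (fst g * x0, of_real (fst g) * cis (fst (snd g)) * a1,
   of_real (fst g) * cis (snd (snd g)) * a2, of_real (fst g) * cis (- (fst (snd g) + snd (snd g))) * a3)"
  by (cases g) (simp add: act_def)

lemma orbit_twonz:
  assumes "orbit_dim3 (x0, a1, a2, a3)"
  shows "twonz a1 a2 a3"
proof (rule ccontr)
  assume ntw: "\<not> twonz a1 a2 a3"
  obtain D where D: "((\<lambda>g. act g (x0, a1, a2, a3)) has_derivative D) (at (1, 0, 0))" and dim: "dim (range D) = 3"
    using assms unfolding orbit_dim3_def by blast
  define D0 where "D0 = (\<lambda>h::real \<times> real \<times> real. (fst h * x0, (of_real (fst h) + \<i> * of_real (fst (snd h))) * a1,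
     (of_real (fst h) + \<i> * of_real (snd (snd h))) * a2,
     (of_real (fst h) - \<i> * of_real (fst (snd h) + snd (snd h))) * a3))"
  have "((\<lambda>g. act g (x0, a1, a2, a3)) has_derivative D0) (at (1, 0, 0))"
    unfolding act_eq D0_def
    by (auto intro!: derivative_eq_intros ext simp: algebra_simps complex_eq_iff)
  then have DD: "D0 = D" using D by (rule has_derivative_unique)
  obtain v1 v2 cf where sp: "\<And>h. D0 h = fst h *\<^sub>R v1 + cf h *\<^sub>R v2"
  proof -
    consider "a2 = 0 \<and> a3 = 0" | "a1 = 0 \<and> a3 = 0" | "a1 = 0 \<and> a2 = 0" using ntw unfolding twonz_def by blast
    then show ?thesis
    proof cases
      case 1
      show ?thesis
        by (rule that[of "(x0, a1, 0, 0)" "\<lambda>h. fst (snd h)" "(0, \<i> * a1, 0, 0)"]) (use 1 in \<open>auto simp: D0_def algebra_simps complex_eq_iff\<close>)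
    next
      case 2
      show ?thesis
        by (rule that[of "(x0, 0, a2, 0)" "\<lambda>h. snd (snd h)" "(0, 0, \<i> * a2, 0)"]) (use 2 in \<open>auto simp: D0_def algebra_simps complex_eq_iff\<close>)
    next
      case 3
      show ?thesis
        by (rule that[of "(x0, 0, 0, a3)" "\<lambda>h. fst (snd h) + snd (snd h)" "(0, 0, 0, - \<i> * a3)"]) (use 3 in \<open>auto simp: D0_def algebra_simps complex_eq_iff\<close>)
    qed
  qed
  have "range D0 \<subseteq> span {v1, v2}"
  proof
    fix y assume "y \<in> range D0"
    then obtain h where "y = D0 h" by auto
    moreover have "D0 h \<in> span {v1, v2}" unfolding sp
      by (intro span_add span_mul span_base) auto
    ultimately show "y \<in> span {v1, v2}" by simp
  qed
  then have "dim (range D0) \<le> card {v1, v2}" by (rule dim_le_card) simp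
  also have "\<dots> \<le> 2" by (simp add: card_insert_if)
  finally show False using dim DD by simp
qed

lemma Ck_id: "Ck_on k (\<lambda>x. x) U"
proof (induction k)
  case 0 then show ?case by (simp add: continuous_on_id)
next
  case (Suc k)
  show ?case by (rule CkSucI[where Df="\<lambda>x v. v"]) (rule has_derivative_ident, rule Ck_const)
qed

lemma act_eq2: "act g p = (fst g * fst p, of_real (fst g) * cis (fst (snd g)) * fst (snd p),
   of_real (fst g) * cis (snd (snd g)) * fst (snd (snd p)),
   of_real (fst g) * cis (- (fst (snd g) + snd (snd g))) * snd (snd (snd p)))"
  by (cases g; cases p) (simp add: act_def)

lemma bl_t: "bounded_linear (\<lambda>y::real \<times> real \<times> real \<times> real. snd (snd (snd y)))"
  by (intro bounded_linear_intros)
lemma bl_f1: "bounded_linear (\<lambda>y::real \<times> real \<times> real \<times> real. fst (snd y))"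
  by (intro bounded_linear_intros)
lemma bl_f2: "bounded_linear (\<lambda>y::real \<times> real \<times> real \<times> real. fst (snd (snd y)))"
  by (intro bounded_linear_intros)
lemma bl_f3: "bounded_linear (\<lambda>y::real \<times> real \<times> real \<times> real. - (fst (snd y) + fst (snd (snd y))))"
proof -
  have "bounded_linear (\<lambda>y::real \<times> real \<times> real \<times> real. (-1) * (fst (snd y) + fst (snd (snd y))))"
    by (intro bounded_linear_intros)
  then show ?thesis by simp
qed

lemma coassoc:
  fixes U :: "real \<Rightarrow> R7"
  assumes dU: "\<And>t. (U has_vector_derivative Gv (U t)) (at t)"
    and sm: "smooth_on U UNIV"
    and re: "\<And>t. Re (fst (snd (U t)) * fst (snd (snd (U t))) * snd (snd (snd (U t)))) = 0"
    and tw: "\<And>t. twonz (fst (snd (U t))) (fst (snd (snd (U t)))) (snd (snd (snd (U t))))"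
  shows "coassociative_4fold {act (r, f1, f2) (U t) | r f1 f2 t. r > 0}"
proof -
  define Uo where "Uo = {y :: real \<times> real \<times> real \<times> real. 0 < fst y}"
  define F where "F = (\<lambda>y :: real \<times> real \<times> real \<times> real.
     act (fst y, fst (snd y), fst (snd (snd y))) (U (snd (snd (snd y)))))"
  have oU: "open Uo" unfolding Uo_def by (rule open_Collect_less) (intro continuous_intros)+
  have "(1, 0, 0, 0) \<in> Uo" unfolding Uo_def by simp
  then have ne: "Uo \<noteq> {}" by blast
  have img: "F ` Uo = {act (r, f1, f2) (U t) | r f1 f2 t. r > 0}"
  proof
    show "F ` Uo \<subseteq> {act (r, f1, f2) (U t) | r f1 f2 t. r > 0}" unfolding F_def Uo_def by auto
    show "{act (r, f1, f2) (U t) | r f1 f2 t. r > 0} \<subseteq> F ` Uo"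
    proof
      fix q assume "q \<in> {act (r, f1, f2) (U t) | r f1 f2 t. r > 0}"
      then obtain r f1 f2 t where "q = act (r, f1, f2) (U t)" "r > 0" by blast
      then show "q \<in> F ` Uo" unfolding F_def Uo_def by (intro image_eqI[of _ _ "(r, f1, f2, t)"]) auto
    qed
  qed
  have smF: "smooth_on F Uo"
    unfolding smooth_on_def
  proof
    fix k
    have cT: "Ck_on k (\<lambda>y. U (snd (snd (snd y)))) Uo"
      using Ck_comp_linear[OF bl_t, of Uo UNIV k U] sm unfolding smooth_on_def by auto
    have cr: "Ck_on k (\<lambda>y::real \<times> real \<times> real \<times> real. fst y) Uo"
      by (rule Ck_linear[OF bounded_linear_fst Ck_id])
    have c1: "Ck_on k (\<lambda>y. cis (fst (snd y))) Uo"
      using Ck_comp_linear[OF bl_f1, of Uo UNIV k cis] Ck_cis by auto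
    have c2: "Ck_on k (\<lambda>y. cis (fst (snd (snd y)))) Uo"
      using Ck_comp_linear[OF bl_f2, of Uo UNIV k cis] Ck_cis by auto
    have c3: "Ck_on k (\<lambda>y. cis (- (fst (snd y) + fst (snd (snd y))))) Uo"
      using Ck_comp_linear[OF bl_f3, of Uo UNIV k cis] Ck_cis by auto
    show "Ck_on k F Uo"
      unfolding F_def act_eq2 fst_conv snd_conv
      by (intro Ck_Pair Ck_mult Ck_linear[OF bounded_linear_of_real] cr c1 c2 c3
          Ck_linear[OF bounded_linear_fst cT] Ck_linear[OF bounded_linear_fst Ck_linear[OF bounded_linear_snd cT]]
          Ck_linear[OF bounded_linear_fst Ck_linear[OF bounded_linear_snd Ck_linear[OF bounded_linear_snd cT]]]
          Ck_linear[OF bounded_linear_snd Ck_linear[OF bounded_linear_snd Ck_linear[OF bounded_linear_snd cT]]])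
  qed
  have der: "\<exists>D. (F has_derivative D) (at y) \<and> inj D \<and> (\<forall>a b c. phi0 (D a) (D b) (D c) = 0)" if y: "y \<in> Uo" for y
  proof -
    obtain r f1 f2 t where yy: "y = (r, f1, f2, t)" by (cases y) auto
    have r: "0 < r" using y unfolding Uo_def yy by simp
    obtain x z1 z2 z3 where ut: "U t = (x, z1, z2, z3)" by (cases "U t") auto
    define p where "p = U t"
    define e1 where "e1 = (0::real, \<i> * z1, 0::complex, - \<i> * z3)"
    define e2 where "e2 = (0::real, 0::complex, \<i> * z2, - \<i> * z3)"
    define V where "V = Gv (U t)"
    define Y where "Y = (\<lambda>h::real \<times> real \<times> real \<times> real. fst h *\<^sub>R p + (r * fst (snd h)) *\<^sub>R e1
        + (r * fst (snd (snd h))) *\<^sub>R e2 + (r * snd (snd (snd h))) *\<^sub>R V)"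
    define D where "D = (\<lambda>h. rot f1 f2 (Y h))"
    have dUy: "((\<lambda>y. U (snd (snd (snd y)))) has_derivative (\<lambda>h. snd (snd (snd h)) *\<^sub>R Gv (U (snd (snd (snd y)))))) (at y)"
      using has_derivative_compose[OF bounded_linear_imp_has_derivative[OF bl_t], of U "\<lambda>h. h *\<^sub>R Gv (U (snd (snd (snd y))))" y UNIV]
        dU[of "snd (snd (snd y))"] unfolding has_vector_derivative_def by simp
    have dF: "(F has_derivative D) (at y)"
      unfolding F_def act_eq2 fst_conv snd_conv
      apply (rule has_derivative_eq_rhs)
       apply (rule derivative_eq_intros dUy refl | simp)+
      apply (rule ext)
      apply (simp add: D_def Y_def rot_def yy ut p_def e1_def e2_def V_def Gv_def scaleR_conv_of_real algebra_simps)
      done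
    have bl: "bounded_linear D" using dF by (rule has_derivative_bounded_linear)
    have rot0: "q = 0" if "rot f1 f2 q = 0" for q
      using that by (simp add: rot_def prod_eq_iff zero_prod_def)
    have "inj D"
      unfolding linear_injective_0[OF bounded_linear.linear[OF bl]]
    proof (intro allI impI)
      fix h assume "D h = 0"
      then have "Y h = 0" unfolding D_def by (rule rot0)
      then have "fst h *\<^sub>R (x, z1, z2, z3) + (r * fst (snd h)) *\<^sub>R (0, \<i> * z1, 0, - \<i> * z3)
        + (r * fst (snd (snd h))) *\<^sub>R (0, 0, \<i> * z2, - \<i> * z3) + (r * snd (snd (snd h))) *\<^sub>R Gv (x, z1, z2, z3) = 0"
        unfolding Y_def p_def e1_def e2_def V_def ut .
      moreover have "Re (z1 * z2 * z3) = 0" using re[of t] ut by simp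
      moreover have "twonz z1 z2 z3" using tw[of t] ut by simp
      ultimately have "fst h = 0 \<and> r * fst (snd h) = 0 \<and> r * fst (snd (snd h)) = 0 \<and> r * snd (snd (snd h)) = 0"
        by (intro indep)
      then show "h = 0" using r by (simp add: prod_eq_iff zero_prod_def)
    qed
    have b1: "phi0 p e1 e2 = 0"
    proof -
      have "phi0 p e1 e2 = - 3 * Re (z1 * z2 * z3)" unfolding p_def e1_def e2_def ut by (rule base1)
      moreover have "Re (z1 * z2 * z3) = 0" using re[of t] ut by simp
      ultimately show ?thesis by simp
    qed
    have b2: "phi0 p e1 V = 0" unfolding p_def e1_def V_def ut by (rule base2)
    have b3: "phi0 p e2 V = 0" unfolding p_def e2_def V_def ut by (rule base3)
    have b4: "phi0 e1 e2 V = 0" unfolding e1_def e2_def V_def ut by (rule base4)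
    have "phi0 (D a) (D b) (D c) = 0" for a b c
      unfolding D_def phi0_rot Y_def
      by (simp add: phi0_add1 phi0_add2 phi0_add3 phi0_scale1 phi0_scale2 phi0_scale3 phi0_alt
          phi0_zero_perms[OF b1] phi0_zero_perms[OF b2] phi0_zero_perms[OF b3] phi0_zero_perms[OF b4])
    then show ?thesis using dF \<open>inj D\<close> by blast
  qed
  show ?thesis unfolding coassociative_4fold_def
    apply (rule exI[of _ Uo], rule exI[of _ F])
    apply (intro conjI oU ne smF img ballI)
    apply (erule der)
    done
qed

lemma norm4_sq: "(norm (x::real, z1::complex, z2::complex, z3::complex))\<^sup>2 = x\<^sup>2 + (cmod z1)\<^sup>2 + (cmod z2)\<^sup>2 + (cmod z3)\<^sup>2"
  by (simp add: norm_Pair)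

lemma Re_prod_deriv:
  assumes "is_solution_on UNIV x z1 z2 z3"
  shows "((\<lambda>t. Re (z1 t * z2 t * z3 t)) has_derivative (\<lambda>h. 0)) (at t within UNIV)"
proof -
  have d1: "(z1 has_derivative (\<lambda>h. h *\<^sub>R (z1 t * of_real ((cmod (z2 t))\<^sup>2 - (cmod (z3 t))\<^sup>2) + \<i> * of_real (x t) * cnj (z2 t * z3 t)))) (at t)"
   and d2: "(z2 has_derivative (\<lambda>h. h *\<^sub>R (z2 t * of_real ((cmod (z3 t))\<^sup>2 - (cmod (z1 t))\<^sup>2) + \<i> * of_real (x t) * cnj (z3 t * z1 t)))) (at t)"
   and d3: "(z3 has_derivative (\<lambda>h. h *\<^sub>R (z3 t * of_real ((cmod (z1 t))\<^sup>2 - (cmod (z2 t))\<^sup>2) + \<i> * of_real (x t) * cnj (z1 t * z2 t)))) (at t)"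
    using assms unfolding is_solution_on_def has_vector_derivative_def by auto
  define E where "E = (z1 t * of_real ((cmod (z2 t))\<^sup>2 - (cmod (z3 t))\<^sup>2) + \<i> * of_real (x t) * cnj (z2 t * z3 t)) * z2 t * z3 t
           + z1 t * (z2 t * of_real ((cmod (z3 t))\<^sup>2 - (cmod (z1 t))\<^sup>2) + \<i> * of_real (x t) * cnj (z3 t * z1 t)) * z3 t
           + z1 t * z2 t * (z3 t * of_real ((cmod (z1 t))\<^sup>2 - (cmod (z2 t))\<^sup>2) + \<i> * of_real (x t) * cnj (z1 t * z2 t))"
  have E0: "Re E = 0" unfolding E_def by (rule Re_deriv_zero)
  have "((\<lambda>t. Re (z1 t * z2 t * z3 t)) has_derivative (\<lambda>h. Re (of_real h * E))) (at t)"
    apply (rule has_derivative_eq_rhs)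
     apply (rule derivative_eq_intros d1 d2 d3 refl)+
    apply (rule ext)
    apply (simp only: E_def scaleR_conv_of_real)
    apply (simp add: algebra_simps)
    done
  moreover have "(\<lambda>h. Re (of_real h * E)) = (\<lambda>h. 0)" using E0 by auto
  ultimately show ?thesis by simp
qed

theorem theorem6p4:
  fixes x0 :: real and a1 a2 a3 :: complex
  assumes "Re (a1 * a2 * a3) = 0"
    and "orbit_dim3 (x0, a1, a2, a3)"
  shows "(\<exists>x z1 z2 z3. is_solution_on UNIV x z1 z2 z3 \<and>
           x 0 = x0 \<and> z1 0 = a1 \<and> z2 0 = a2 \<and> z3 0 = a3) \<and>
         (\<forall>I x z1 z2 z3. open I \<and> is_interval I \<and> 0 \<in> I \<and> is_solution_on I x z1 z2 z3 \<and>
           x 0 = x0 \<and> z1 0 = a1 \<and> z2 0 = a2 \<and> z3 0 = a3 \<longrightarrow>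
           (\<exists>y w1 w2 w3. is_solution_on UNIV y w1 w2 w3 \<and>
              (\<forall>t\<in>I. y t = x t \<and> w1 t = z1 t \<and> w2 t = z2 t \<and> w3 t = z3 t))) \<and>
         (\<forall>x z1 z2 z3. is_solution_on UNIV x z1 z2 z3 \<and>
           x 0 = x0 \<and> z1 0 = a1 \<and> z2 0 = a2 \<and> z3 0 = a3 \<longrightarrow>
           (\<forall>t. Re (z1 t * z2 t * z3 t) = 0) \<and>
           (\<exists>c. \<forall>t. (x t)\<^sup>2 + (cmod (z1 t))\<^sup>2 + (cmod (z2 t))\<^sup>2 + (cmod (z3 t))\<^sup>2 = c) \<and>
           coassociative_4fold
             {act (r, f1, f2) (x t, z1 t, z2 t, z3 t) | r f1 f2 t. r > 0})"
proof -
  note re0 = assms(1) and orb = assms(2)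
  obtain U where U0: "U 0 = (x0, a1, a2, a3)" and dU: "\<And>t. (U has_vector_derivative Gv (U t)) (at t)"
    using global_exists[of "(x0, a1, a2, a3)"] by blast
  have solU: "is_solution_on UNIV (\<lambda>t. fst (U t)) (\<lambda>t. fst (snd (U t))) (\<lambda>t. fst (snd (snd (U t)))) (\<lambda>t. snd (snd (snd (U t))))"
    by (rule sol_of_deriv) (rule dU)
  have P1: "\<exists>x z1 z2 z3. is_solution_on UNIV x z1 z2 z3 \<and> x 0 = x0 \<and> z1 0 = a1 \<and> z2 0 = a2 \<and> z3 0 = a3"
    using solU U0 by (intro exI[of _ "\<lambda>t. fst (U t)"] exI[of _ "\<lambda>t. fst (snd (U t))"]
       exI[of _ "\<lambda>t. fst (snd (snd (U t)))"] exI[of _ "\<lambda>t. snd (snd (snd (U t)))"]) simp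
  have P2: "\<forall>I x z1 z2 z3. open I \<and> is_interval I \<and> 0 \<in> I \<and> is_solution_on I x z1 z2 z3 \<and>
           x 0 = x0 \<and> z1 0 = a1 \<and> z2 0 = a2 \<and> z3 0 = a3 \<longrightarrow>
           (\<exists>y w1 w2 w3. is_solution_on UNIV y w1 w2 w3 \<and>
              (\<forall>t\<in>I. y t = x t \<and> w1 t = z1 t \<and> w2 t = z2 t \<and> w3 t = z3 t))"
  proof (intro allI impI)
    fix I x z1 z2 z3
    assume h: "open I \<and> is_interval I \<and> 0 \<in> I \<and> is_solution_on I x z1 z2 z3 \<and>
           x 0 = x0 \<and> z1 0 = a1 \<and> z2 0 = a2 \<and> z3 0 = a3"
    have eqI: "U t = (x t, z1 t, z2 t, z3 t)" if t: "t \<in> I" for t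
    proof (rule Gv_unique[of I 0 U "\<lambda>t. (x t, z1 t, z2 t, z3 t)"])
      show "is_interval I" "0 \<in> I" using h by auto
      show "\<And>t. t \<in> I \<Longrightarrow> (U has_vector_derivative Gv (U t)) (at t)" by (rule dU)
      show "\<And>t. t \<in> I \<Longrightarrow> ((\<lambda>t. (x t, z1 t, z2 t, z3 t)) has_vector_derivative Gv (x t, z1 t, z2 t, z3 t)) (at t)"
        using h by (intro sol_deriv) auto
      show "U 0 = (x 0, z1 0, z2 0, z3 0)" using h U0 by simp
      show "t \<in> I" by (rule t)
    qed
    show "\<exists>y w1 w2 w3. is_solution_on UNIV y w1 w2 w3 \<and>
              (\<forall>t\<in>I. y t = x t \<and> w1 t = z1 t \<and> w2 t = z2 t \<and> w3 t = z3 t)"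
      using solU eqI by (intro exI[of _ "\<lambda>t. fst (U t)"] exI[of _ "\<lambda>t. fst (snd (U t))"]
       exI[of _ "\<lambda>t. fst (snd (snd (U t)))"] exI[of _ "\<lambda>t. snd (snd (snd (U t)))"]) simp
  qed
  have P3: "(\<forall>t. Re (z1 t * z2 t * z3 t) = 0) \<and>
           (\<exists>c. \<forall>t. (x t)\<^sup>2 + (cmod (z1 t))\<^sup>2 + (cmod (z2 t))\<^sup>2 + (cmod (z3 t))\<^sup>2 = c) \<and>
           coassociative_4fold
             {act (r, f1, f2) (x t, z1 t, z2 t, z3 t) | r f1 f2 t. r > 0}"
    if h: "is_solution_on UNIV x z1 z2 z3 \<and> x 0 = x0 \<and> z1 0 = a1 \<and> z2 0 = a2 \<and> z3 0 = a3" for x z1 z2 z3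
  proof -
    have sol: "is_solution_on UNIV x z1 z2 z3" using h by simp
    define W where "W = (\<lambda>t. (x t, z1 t, z2 t, z3 t))"
    have dW: "\<And>t. (W has_vector_derivative Gv (W t)) (at t)"
      unfolding W_def using sol by (intro sol_deriv) auto
    have W0: "W 0 = (x0, a1, a2, a3)" using h unfolding W_def by simp
    have smW: "smooth_on W UNIV" using sol unfolding is_solution_on_def W_def by simp
    have reT: "\<forall>t. Re (z1 t * z2 t * z3 t) = 0"
    proof -
      have "\<exists>c. \<forall>t\<in>UNIV. Re (z1 t * z2 t * z3 t) = c"
        by (rule has_derivative_zero_constant) (simp, rule Re_prod_deriv[OF sol])
      then obtain c where c: "\<And>t. Re (z1 t * z2 t * z3 t) = c" by blast
      have "c = 0" using c[of 0] h re0 by simp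
      then show ?thesis using c by simp
    qed
    have nT: "\<exists>c. \<forall>t. (x t)\<^sup>2 + (cmod (z1 t))\<^sup>2 + (cmod (z2 t))\<^sup>2 + (cmod (z3 t))\<^sup>2 = c"
    proof (intro exI allI)
      fix t
      have "norm (W t) = norm (W 0)" by (rule Gv_norm_const[of UNIV W]) (auto intro: dW)
      then have "(norm (W t))\<^sup>2 = (norm (W 0))\<^sup>2" by simp
      then show "(x t)\<^sup>2 + (cmod (z1 t))\<^sup>2 + (cmod (z2 t))\<^sup>2 + (cmod (z3 t))\<^sup>2 = (norm (W 0))\<^sup>2"
        unfolding W_def norm4_sq by simp
    qed
    have twT: "twonz (z1 t) (z2 t) (z3 t)" for t
    proof (rule ccontr)
      assume nt: "\<not> twonz (z1 t) (z2 t) (z3 t)"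
      have "W 0 = (\<lambda>s. W t) 0"
      proof (rule Gv_unique[of UNIV t W "\<lambda>s. W t"])
        show "is_interval (UNIV :: real set)" by simp
        show "t \<in> UNIV" "(0::real) \<in> UNIV" by simp_all
        show "\<And>s. s \<in> UNIV \<Longrightarrow> (W has_vector_derivative Gv (W s)) (at s)" by (rule dW)
        have "Gv (W t) = 0" unfolding W_def by (rule Gv_equil[OF nt])
        then show "\<And>s. s \<in> UNIV \<Longrightarrow> ((\<lambda>s. W t) has_vector_derivative Gv ((\<lambda>s. W t) s)) (at s)"
          by (simp add: has_vector_derivative_const)
        show "W t = (\<lambda>s. W t) t" by simp
      qed
      then have "W 0 = W t" by simp
      moreover have "twonz a1 a2 a3" by (rule orbit_twonz[OF orb])
      ultimately show False using nt W0 unfolding W_def by simp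
    qed
    have co: "coassociative_4fold {act (r, f1, f2) (W t) | r f1 f2 t. r > 0}"
      by (rule coassoc[OF dW smW]) (use reT twT in \<open>simp_all add: W_def\<close>)
    show ?thesis using reT nT co unfolding W_def by simp
  qed
  show ?thesis using P1 P2 P3 by blast
qed

end
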